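(* Let $P\in\Psi^w(\mathscr A_\theta)$, $w>0$, be elliptic with principal symbol $\rho_w$, and assume $\Theta(P)\ne\emptyset$. Then $\Theta(P)$ is an open cone in $\C^*$.
   Context: Noncommutative torus: fix $n\ge2$, real antisymmetric $\theta$; $A_\theta$ is the C*-algebra generated by unitaries $U_1,\dots,U_n$ with $U_kU_j=e^{2i\pi\theta_{jk}}U_jU_k$; $\mathscr A_\theta$ is its dense Fréchet subalgebra of smooth elements for the action $\alpha_s(U^k)=e^{is\cdot k}U^k$, where $U^k=U_1^{k_1}\cdots U_n^{k_n}$. $P\in\Psi^w(\mathscr A_\theta)$ means $P(\sum u_kU^k)=\sum u_k\rho(k)U^k$ with $\rho\in C^\infty(\R^n;\mathscr A_\theta)$ classical: $\rho\sim\sum_{j\ge0}\rho_{w-j}$, $\rho_{w-j}\in C^\infty(\R^n\setminus0;\mathscr A_\theta)$ homogeneous of degree $w-j$; $\rho_w$ is the principal symbol; $P$ elliptic means $\rho_w(\xi)$ is invertible in $\mathscr A_\theta$ for all $\xi\ne0$. $\Theta(P)=\{\lambda\in\C^*:\rho_w(\xi)-\lambda\text{ is invertible for all }\xi\in\R^n\setminus0\}$. A cone in $\C^*$ is a subset $\Theta$ with $t\Theta\subset\Theta$ for all $t>0$. *)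

theory Defs
  imports "HOL-Analysis.Analysis"
begin

text \<open>An element sum u_k U^k of the smooth
algebra is represented by its coefficient function u on the lattice Z^n = int^'n.\<close>

definition lat :: "int^'n::finite \<Rightarrow> real^'n" where
  "lat k = (\<chi> i. real_of_int (k$i))"

definition nct_smooth :: "(int^'n::finite \<Rightarrow> complex) set" where
  "nct_smooth = {u. \<forall>N::nat. \<exists>C. \<forall>k. (1 + norm (lat k)) ^ N * cmod (u k) \<le> C}"

text \<open>U^k U^l = twist k l U^(k+l), where U^k = U_1^k1 ... U_n^kn (increasing order of
the index type) and U_i U_j = e^(2 pi i theta_ji) U_j U_i.\<close>

definition twist :: "real^'n::{finite,linorder}^'n::{finite,linorder} \<Rightarrow> int^'n::{finite,linorder} \<Rightarrow> int^'n::{finite,linorder} \<Rightarrow> complex" where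
  "twist \<theta> k l = cis (2 * pi * (\<Sum>i\<in>UNIV. \<Sum>j\<in>{j. j < i}.
      \<theta>$j$i * real_of_int (k$i) * real_of_int (l$j)))"

definition nct_mult :: "real^'n::{finite,linorder}^'n::{finite,linorder} \<Rightarrow> (int^'n::{finite,linorder} \<Rightarrow> complex)
    \<Rightarrow> (int^'n::{finite,linorder} \<Rightarrow> complex) \<Rightarrow> (int^'n::{finite,linorder} \<Rightarrow> complex)" where
  "nct_mult \<theta> u v = (\<lambda>m. infsum (\<lambda>k. u k * v (m - k) * twist \<theta> k (m - k)) UNIV)"

definition nct_one :: "int^'n::finite \<Rightarrow> complex" where
  "nct_one = (\<lambda>k. if k = 0 then 1 else 0)"

definition nct_invertible :: "real^'n::{finite,linorder}^'n::{finite,linorder} \<Rightarrow> (int^'n::{finite,linorder} \<Rightarrow> complex) \<Rightarrow> bool" where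
  "nct_invertible \<theta> u \<longleftrightarrow> u \<in> nct_smooth \<and>
     (\<exists>v\<in>nct_smooth. nct_mult \<theta> u v = nct_one \<and> nct_mult \<theta> v u = nct_one)"

definition coef_partial :: "'n \<Rightarrow> (real^'n::finite \<Rightarrow> complex) \<Rightarrow> real^'n \<Rightarrow> complex" where
  "coef_partial i g \<xi> = vector_derivative (\<lambda>t::real. g (\<xi> + t *\<^sub>R axis i 1)) (at 0)"

fun pds :: "'n list \<Rightarrow> (real^'n::finite \<Rightarrow> complex) \<Rightarrow> real^'n \<Rightarrow> complex" where
  "pds [] g = g"
| "pds (i # is) g = coef_partial i (pds is g)"

definition has_all_partials_on :: "(real^'n::finite) set \<Rightarrow> (real^'n \<Rightarrow> complex) \<Rightarrow> bool" where
  "has_all_partials_on S g \<longleftrightarrow> (\<forall>is i. \<forall>\<xi>\<in>S.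
     ((\<lambda>t::real. pds is g (\<xi> + t *\<^sub>R axis i 1)) has_vector_derivative pds (i # is) g \<xi>) (at 0))"

text \<open>Smoothness of a function with values in the smooth algebra (Frechet topology given by
the seminorms sup_k (1+|k|)^N |u_k|): all coefficientwise partial derivatives exist and are
locally bounded in every seminorm.\<close>
definition valued_smooth_on :: "(real^'n::finite) set \<Rightarrow> (real^'n \<Rightarrow> int^'n \<Rightarrow> complex) \<Rightarrow> bool" where
  "valued_smooth_on S F \<longleftrightarrow> (\<forall>k. has_all_partials_on S (\<lambda>\<xi>. F \<xi> k)) \<and>
     (\<forall>is (N::nat) K. compact K \<and> K \<subseteq> S \<longrightarrow>
        (\<exists>C. \<forall>\<xi>\<in>K. \<forall>k. (1 + norm (lat k)) ^ N * cmod (pds is (\<lambda>\<eta>. F \<eta> k) \<xi>) \<le> C))"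

text \<open>Classical symbol of order w with homogeneous components \<rho>s j of degree w - j
(\<rho>s 0 is the principal symbol).\<close>
definition classical_symbol :: "real \<Rightarrow> (real^'n::finite \<Rightarrow> int^'n \<Rightarrow> complex)
    \<Rightarrow> (nat \<Rightarrow> real^'n \<Rightarrow> int^'n \<Rightarrow> complex) \<Rightarrow> bool" where
  "classical_symbol w \<rho> \<rho>s \<longleftrightarrow>
     valued_smooth_on UNIV \<rho> \<and>
     (\<forall>is (N::nat). \<exists>C. \<forall>\<xi> k. (1 + norm (lat k)) ^ N * cmod (pds is (\<lambda>\<eta>. \<rho> \<eta> k) \<xi>)
        \<le> C * (1 + norm \<xi>) powr (w - real (length is))) \<and>
     (\<forall>j. valued_smooth_on (- {0}) (\<rho>s j) \<and>
        (\<forall>t::real. \<forall>\<xi>. t > 0 \<and> \<xi> \<noteq> 0 \<longrightarrow>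
           \<rho>s j (t *\<^sub>R \<xi>) = (\<lambda>k. complex_of_real (t powr (w - real j)) * \<rho>s j \<xi> k))) \<and>
     (\<forall>M is (N::nat). \<exists>C. \<forall>\<xi> k. norm \<xi> \<ge> 1 \<longrightarrow>
        (1 + norm (lat k)) ^ N * cmod (pds is (\<lambda>\<eta>. \<rho> \<eta> k - (\<Sum>j<M. \<rho>s j \<eta> k)) \<xi>)
          \<le> C * norm \<xi> powr (w - real M - real (length is)))"

definition nct_elliptic :: "real^'n::{finite,linorder}^'n::{finite,linorder} \<Rightarrow> (real^'n::{finite,linorder} \<Rightarrow> int^'n::{finite,linorder} \<Rightarrow> complex) \<Rightarrow> bool" where
  "nct_elliptic \<theta> \<rho>w \<longleftrightarrow> (\<forall>\<xi>. \<xi> \<noteq> 0 \<longrightarrow> nct_invertible \<theta> (\<rho>w \<xi>))"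

definition Theta :: "real^'n::{finite,linorder}^'n::{finite,linorder} \<Rightarrow> (real^'n::{finite,linorder} \<Rightarrow> int^'n::{finite,linorder} \<Rightarrow> complex) \<Rightarrow> complex set" where
  "Theta \<theta> \<rho>w = {z. z \<noteq> 0 \<and>
     (\<forall>\<xi>. \<xi> \<noteq> 0 \<longrightarrow> nct_invertible \<theta> (\<lambda>k. \<rho>w \<xi> k - z * nct_one k))}"

definition is_cone :: "complex set \<Rightarrow> bool" where
  "is_cone \<Theta> \<longleftrightarrow> (\<forall>t::real. \<forall>z\<in>\<Theta>. t > 0 \<longrightarrow> complex_of_real t * z \<in> \<Theta>)"

end

theory Submission
  imports Defs
begin
definition om :: "int^'n::finite \<Rightarrow> real" where "om k = 1 + norm (lat k)"

lemma lat_add: "lat (k + l) = lat k + lat l"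
  by (simp add: lat_def vec_eq_iff)
lemma lat_diff: "lat (k - l) = lat k - lat l"
  by (simp add: lat_def vec_eq_iff)
lemma lat_0[simp]: "lat 0 = 0"
  by (simp add: lat_def vec_eq_iff)

lemma om_ge1: "om k \<ge> 1" by (simp add: om_def)
lemma om_pos: "om k > 0" by (simp add: om_def add_pos_nonneg)
lemma om_nonneg[simp]: "0 \<le> om k" using om_pos[of k] by simp
lemma om_pow_nonneg[simp]: "0 \<le> om k ^ N" by simp
lemma om_pow_pos[simp]: "0 < om k ^ N" using om_pos[of k] by simp
lemma om_pow_ge1: "1 \<le> om k ^ N" using om_ge1[of k] by (simp add: one_le_power)
lemma om_add_le: "om (k + l) \<le> om k + om l"
  unfolding om_def lat_add using norm_triangle_ineq[of "lat k" "lat l"] by simp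
lemma om_mult_le: "om (k + l) \<le> om k * om l"
proof -
  have "om (k+l) \<le> 1 + norm (lat k) + norm (lat l)"
    unfolding om_def lat_add using norm_triangle_ineq[of "lat k" "lat l"] by simp
  also have "\<dots> \<le> om k * om l" unfolding om_def by (simp add: algebra_simps)
  finally show ?thesis .
qed
lemma om_pow_mult_le: "om (k + l) ^ N \<le> om k ^ N * om l ^ N"
  by (metis om_mult_le power_mono power_mult_distrib om_pos less_imp_le)

lemma sum1_nat: "summable (\<lambda>n::nat. 1 / (1 + real n)^2)"
  proof -
    have "summable (\<lambda>n::nat. inverse (real n ^ 2))"
      using inverse_power_summable[of 2, where 'a=real] by simp
    then have "summable (\<lambda>n::nat. inverse (real (Suc n) ^ 2))"
      by (subst summable_Suc_iff)
    moreover have "\<And>n. inverse (real (Suc n) ^ 2) = 1 / (1 + real n)^2"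
      by (simp add: divide_inverse)
    ultimately show ?thesis by simp
  qed
lemma sum1_int_a: "((\<lambda>j::int. 1 / (1 + \<bar>real_of_int j\<bar>)^2) \<circ> int) summable_on UNIV"
proof -
  have "((\<lambda>j::int. 1 / (1 + \<bar>real_of_int j\<bar>)^2) \<circ> int) = (\<lambda>n::nat. 1 / (1 + real n)^2)"
    by (auto simp: o_def)
  then show ?thesis using sum1_nat summable_on_UNIV_nonneg_real_iff[of "\<lambda>n::nat. 1 / (1 + real n)^2"] by simp
qed

lemma sum1_int: "(\<lambda>j::int. 1 / (1 + \<bar>real_of_int j\<bar>)^2) summable_on UNIV"
proof -
  let ?f = "\<lambda>j::int. 1 / (1 + \<bar>real_of_int j\<bar>)^2"
  have "(?f \<circ> (\<lambda>n. - int n)) = (\<lambda>n::nat. 1 / (1 + real n)^2)"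
    by (auto simp: o_def)
  then have b: "(?f \<circ> (\<lambda>n. - int n)) summable_on UNIV"
    using sum1_nat summable_on_UNIV_nonneg_real_iff[of "\<lambda>n::nat. 1 / (1 + real n)^2"] by simp
  have a': "?f summable_on range int"
    using sum1_int_a by (subst summable_on_reindex) (auto simp: inj_on_def)
  have b': "?f summable_on range (\<lambda>n. - int n)"
    using b by (subst summable_on_reindex) (auto simp: inj_on_def)
  have u: "UNIV = range int \<union> range (\<lambda>n. - int n)"
  proof (rule set_eqI, simp)
    fix x :: int show "x \<in> range int \<or> x \<in> range (\<lambda>n. - int n)"
    proof (cases "x \<ge> 0")
      case True then have "x = int (nat x)" by simp
      then show ?thesis by blast
    next
      case False then have "x = - int (nat (-x))" by simp
      then show ?thesis by blast
    qed
  qed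
  show ?thesis using summable_on_union[OF a' b'] u by simp
qed

lemma sum1_int_pos: "(\<Sum>\<^sub>\<infinity>j::int. 1 / (1 + \<bar>real_of_int j\<bar>)^2) > 0"
proof -
  have "(\<Sum>j\<in>{0::int}. 1 / (1 + \<bar>real_of_int j\<bar>)^2) \<le> (\<Sum>\<^sub>\<infinity>j::int. 1 / (1 + \<bar>real_of_int j\<bar>)^2)"
    by (rule finite_sum_le_infsum[OF sum1_int]) auto
  then show ?thesis by simp
qed

lemma sum_vec_prod: "(\<lambda>k::int^'n::finite. \<Prod>i\<in>UNIV. 1 / (1 + \<bar>real_of_int (k$i)\<bar>)^2) summable_on UNIV"
proof -
  let ?f = "\<lambda>(i::'n) (j::int). 1 / (1 + \<bar>real_of_int j\<bar>)^2"
  let ?g = "\<lambda>g::'n\<Rightarrow>int. \<Prod>i\<in>UNIV. ?f i (g i)"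
  have "infsum ?g (PiE UNIV (\<lambda>_. UNIV)) = (\<Prod>i\<in>UNIV. infsum (?f i) UNIV)"
    by (rule infsum_prod_PiE_abs) (auto intro: sum1_int)
  also have "\<dots> > 0" using sum1_int_pos by (simp add: prod_pos)
  finally have "?g summable_on UNIV"
    using infsum_not_exists by fastforce
  moreover have "range vec_nth = (UNIV :: ('n \<Rightarrow> int) set)"
    by (metis surj_def vec_lambda_inverse UNIV_I)
  ultimately have "?g summable_on range vec_nth" by simp
  then have "(?g \<circ> vec_nth) summable_on UNIV"
    by (subst (asm) summable_on_reindex) (auto simp: inj_on_def vec_eq_iff)
  then show ?thesis by (simp add: o_def)
qed

definition N0 :: "'n::finite itself \<Rightarrow> nat" where "N0 _ = 2 * CARD('n)"

lemma om_inv_summable: "(\<lambda>k::int^'n::finite. 1 / om k ^ (2 * CARD('n::finite))) summable_on UNIV"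
proof (rule summable_on_comparison_test[OF sum_vec_prod])
  fix k :: "int^'n"
  show "0 \<le> 1 / om k ^ (2 * CARD('n))" using om_pos by simp
  have le: "(1 + \<bar>real_of_int (k$i)\<bar>)^2 \<le> om k ^ 2" for i
  proof -
    have "\<bar>real_of_int (k$i)\<bar> \<le> norm (lat k)"
      using component_le_norm_cart[of "lat k" i] by (simp add: lat_def)
    then show ?thesis unfolding om_def by (intro power_mono) auto
  qed
  have "(\<Prod>i\<in>UNIV. (1 + \<bar>real_of_int (k$i)\<bar>)^2) \<le> (\<Prod>i\<in>(UNIV::'n set). om k ^ 2)"
    by (rule prod_mono) (use le in auto)
  also have "\<dots> = om k ^ (2 * CARD('n))" by (simp add: power_mult)
  finally have *: "(\<Prod>i\<in>UNIV. (1 + \<bar>real_of_int (k$i)\<bar>)^2) \<le> om k ^ (2 * CARD('n))" .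
  have pos: "0 < (\<Prod>i\<in>UNIV. (1 + \<bar>real_of_int (k$i)\<bar>)^2)"
    by (intro prod_pos) (auto simp: add_pos_nonneg)
  have "1 / om k ^ (2 * CARD('n)) \<le> 1 / (\<Prod>i\<in>UNIV. (1 + \<bar>real_of_int (k$i)\<bar>)^2)"
    using * pos by (intro divide_left_mono) auto
  also have "\<dots> = (\<Prod>i\<in>UNIV. 1 / (1 + \<bar>real_of_int (k$i)\<bar>)^2)"
    by (simp add: prod_dividef)
  finally show "1 / om k ^ (2 * CARD('n)) \<le> (\<Prod>i\<in>UNIV. 1 / (1 + \<bar>real_of_int (k$i)\<bar>)^2)" .
qed

definition nr :: "nat \<Rightarrow> (int^'n::finite \<Rightarrow> complex) \<Rightarrow> real" where
  "nr N u = (\<Sum>\<^sub>\<infinity>k. om k ^ N * cmod (u k))"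
definition sm :: "(int^'n::finite \<Rightarrow> complex) \<Rightarrow> bool" where
  "sm u \<longleftrightarrow> (\<forall>N. (\<lambda>k. om k ^ N * cmod (u k)) summable_on UNIV)"

lemma nr_nonneg: "nr N u \<ge> 0"
  unfolding nr_def by (rule infsum_nonneg) (simp add: om_pos less_imp_le)

lemma term_le_nr: assumes "(\<lambda>k. om k ^ N * cmod (u k)) summable_on UNIV"
  shows "om k ^ N * cmod (u k) \<le> nr N u"
proof -
  have "(\<Sum>j\<in>{k}. om j ^ N * cmod (u j)) \<le> nr N u"
    unfolding nr_def by (rule finite_sum_le_infsum[OF assms]) (auto simp: om_pos less_imp_le)
  then show ?thesis by simp
qed

lemma smooth_iff: fixes u :: "int^'n::finite \<Rightarrow> complex" shows "u \<in> nct_smooth \<longleftrightarrow> sm u"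
proof
  assume u: "u \<in> nct_smooth"
  show "sm u" unfolding sm_def
  proof
    fix N
    obtain C where C: "\<And>k. om k ^ (N + 2 * CARD('n)) * cmod (u k) \<le> C"
      using u unfolding nct_smooth_def om_def by blast
    have "(\<lambda>k::int^'n. C * (1 / om k ^ (2 * CARD('n)))) summable_on UNIV"
      by (rule summable_on_cmult_right[OF om_inv_summable])
    then show "(\<lambda>k. om k ^ N * cmod (u k)) summable_on UNIV"
    proof (rule summable_on_comparison_test)
      fix k :: "int^'n"
      show "0 \<le> om k ^ N * cmod (u k)" using om_pos[of k] by simp
      have "om k ^ N * cmod (u k) * om k ^ (2 * CARD('n)) \<le> C"
        using C[of k] by (simp add: power_add algebra_simps)
      then show "om k ^ N * cmod (u k) \<le> C * (1 / om k ^ (2 * CARD('n)))"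
        using om_pos[of k] by (simp add: field_simps)
    qed
  qed
next
  assume "sm u"
  then show "u \<in> nct_smooth" unfolding nct_smooth_def sm_def
    using term_le_nr unfolding om_def by blast
qed

lemma sm_summable: "sm u \<Longrightarrow> (\<lambda>k. om k ^ N * cmod (u k)) summable_on UNIV"
  by (simp add: sm_def)

lemma weight_mono_summable:
  assumes "(\<lambda>k. om k ^ N * cmod (u k)) summable_on UNIV" "M \<le> N"
  shows "(\<lambda>k. om k ^ M * cmod (u k)) summable_on UNIV"
  using assms(1) proof (rule summable_on_comparison_test)
  fix k show "0 \<le> om k ^ M * cmod (u k)" using om_pos[of k] by simp
  show "om k ^ M * cmod (u k) \<le> om k ^ N * cmod (u k)"
    using om_ge1[of k] assms(2) by (intro mult_right_mono power_increasing) auto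
qed

lemma nr_mono_weight:
  assumes "(\<lambda>k. om k ^ N * cmod (u k)) summable_on UNIV" "M \<le> N"
  shows "nr M u \<le> nr N u"
  unfolding nr_def
  by (rule infsum_mono[OF weight_mono_summable[OF assms] assms(1)])
     (use om_ge1 assms(2) in \<open>auto intro!: mult_right_mono power_increasing\<close>)

lemma cmod_twist[simp]: "cmod (twist \<theta> k l) = 1"
  by (simp add: twist_def)

lemma prod_has_sum:
  fixes a b :: "'a \<Rightarrow> real"
  assumes "\<And>k. a k \<ge> 0" "\<And>k. b k \<ge> 0" "a summable_on UNIV" "b summable_on UNIV"
  shows "((\<lambda>(k,l). a k * b l) has_sum (infsum a UNIV * infsum b UNIV)) UNIV"
proof -
  have 1: "((\<lambda>l. a k * b l) has_sum a k * infsum b UNIV) UNIV" for k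
    using has_sum_cmult_right[OF has_sum_infsum[OF assms(4)]] by simp
  have 2: "((\<lambda>k. a k * infsum b UNIV) has_sum (infsum a UNIV * infsum b UNIV)) UNIV"
    using has_sum_cmult_left[OF has_sum_infsum[OF assms(3)]] by simp
  have 3: "(\<lambda>(k,l). a k * b l) summable_on Sigma UNIV (\<lambda>_. UNIV)"
    by (rule summable_on_SigmaI[where g="\<lambda>k. a k * infsum b UNIV"])
       (use 1 2 assms in \<open>auto intro: has_sum_imp_summable\<close>)
  have "((\<lambda>(k,l). a k * b l) has_sum (infsum a UNIV * infsum b UNIV)) (Sigma UNIV (\<lambda>_. UNIV))"
    by (rule has_sum_SigmaI[OF _ 2 3]) (use 1 in auto)
  then show ?thesis by simp
qed

lemma conv_reindex:
  fixes F :: "int^'n::finite \<Rightarrow> int^'n \<Rightarrow> 'b::{comm_monoid_add,topological_space}"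
  shows "((\<lambda>(m,k). F k (m - k)) has_sum S) UNIV \<longleftrightarrow> ((\<lambda>(k,l). F k l) has_sum S) UNIV"
  by (rule has_sum_reindex_bij_witness[where i="\<lambda>(k,l). (k+l, k)" and j="\<lambda>(m,k). (k, m-k)"]) auto

lemma mult_main:
  fixes u v :: "int^'n::{finite,linorder} \<Rightarrow> complex"
  assumes su: "(\<lambda>k. om k ^ N * cmod (u k)) summable_on UNIV"
    and sv: "(\<lambda>k. om k ^ N * cmod (v k)) summable_on UNIV"
  shows "(\<lambda>(k,l). om (k+l) ^ N * (cmod (u k) * cmod (v l))) summable_on UNIV"
    and "(\<lambda>k. cmod (u k * v (m-k) * twist \<theta> k (m-k))) summable_on UNIV"
    and "(\<lambda>m. om m ^ N * cmod (nct_mult \<theta> u v m)) summable_on UNIV"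
    and "nr N (nct_mult \<theta> u v) \<le> (\<Sum>\<^sub>\<infinity>(k,l). om (k+l) ^ N * (cmod (u k) * cmod (v l)))"
proof -
  define A where "A k = om k ^ N * cmod (u k)" for k
  define B where "B k = om k ^ N * cmod (v k)" for k
  define G where "G = (\<lambda>(k,l). om (k+l) ^ N * (cmod (u k) * cmod (v l)))"
  define H where "H m k = om m ^ N * (cmod (u k) * cmod (v (m-k)))" for m k
  have A0: "A k \<ge> 0" and B0: "B k \<ge> 0" for k
    using om_pos[of k] by (auto simp: A_def B_def)
  have P: "((\<lambda>(k,l). A k * B l) has_sum (infsum A UNIV * infsum B UNIV)) UNIV"
    by (rule prod_has_sum) (use A0 B0 su sv in \<open>auto simp: A_def[abs_def] B_def[abs_def]\<close>)
  have G0: "G x \<ge> 0" for x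
    using om_pos[of "fst x + snd x"] by (auto simp: G_def case_prod_unfold)
  have Gle: "G x \<le> (\<lambda>(k,l). A k * B l) x" for x
  proof (cases x)
    case (Pair k l)
    have "om (k+l) ^ N * (cmod (u k) * cmod (v l)) \<le> (om k ^ N * om l ^ N) * (cmod (u k) * cmod (v l))"
      by (rule mult_right_mono[OF om_pow_mult_le]) simp
    then show ?thesis using Pair by (simp add: G_def A_def B_def algebra_simps)
  qed
  have Gs: "G summable_on UNIV"
    by (rule summable_on_comparison_test[OF has_sum_imp_summable[OF P]]) (use Gle G0 in auto)
  then show "(\<lambda>(k,l). om (k+l) ^ N * (cmod (u k) * cmod (v l))) summable_on UNIV"
    by (simp add: G_def)
  have HG: "(\<lambda>(m,k). H m k) = (\<lambda>(m,k). (\<lambda>k l. G (k,l)) k (m - k))"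
    by (auto simp: H_def G_def fun_eq_iff)
  have Hs: "((\<lambda>(m,k). H m k) has_sum infsum G UNIV) UNIV"
  proof -
    have "((\<lambda>(k,l). (\<lambda>k l. G (k,l)) k l) has_sum infsum G UNIV) UNIV" using Gs by simp
    then have "((\<lambda>(m,k). (\<lambda>k l. G (k,l)) k (m - k)) has_sum infsum G UNIV) UNIV"
      by (rule conv_reindex[THEN iffD2])
    then show ?thesis unfolding HG .
  qed
  have Hs': "(\<lambda>(m,k). H m k) summable_on Sigma UNIV (\<lambda>_. UNIV)"
    using has_sum_imp_summable[OF Hs] by simp
  have Hin: "H m summable_on UNIV" for m
    using summable_on_SigmaD1[OF Hs'] by simp
  have Hout: "(\<lambda>m. infsum (H m) UNIV) summable_on UNIV"
    using summable_on_SigmaD[of "\<lambda>(m,k). H m k" UNIV "\<lambda>_. UNIV"] Hs' Hin by simp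
  have Hval: "(\<Sum>\<^sub>\<infinity>m. infsum (H m) UNIV) = infsum G UNIV"
  proof -
    have "(\<Sum>\<^sub>\<infinity>m. infsum (H m) UNIV) = infsum (\<lambda>(m,k). H m k) (Sigma UNIV (\<lambda>_. UNIV))"
      using infsum_Sigma'_banach[OF Hs'] by simp
    also have "\<dots> = infsum G UNIV" using Hs infsumI by fastforce
    finally show ?thesis .
  qed
  have Tle: "cmod (u k * v (m-k) * twist \<theta> k (m-k)) \<le> H m k" for m k
  proof -
    have "cmod (u k * v (m-k) * twist \<theta> k (m-k)) = 1 * (cmod (u k) * cmod (v (m-k)))"
      by (simp add: norm_mult)
    also have "\<dots> \<le> om m ^ N * (cmod (u k) * cmod (v (m-k)))"
      using om_ge1[of m] by (intro mult_right_mono) (auto simp: one_le_power)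
    finally show ?thesis by (simp add: H_def)
  qed
  have Ts: "(\<lambda>k. cmod (u k * v (m-k) * twist \<theta> k (m-k))) summable_on UNIV" for m
    by (rule summable_on_comparison_test[OF Hin[of m]]) (use Tle in auto)
  then show "(\<lambda>k. cmod (u k * v (m-k) * twist \<theta> k (m-k))) summable_on UNIV" .
  have pt: "om m ^ N * cmod (nct_mult \<theta> u v m) \<le> infsum (H m) UNIV" for m
  proof -
    have "cmod (nct_mult \<theta> u v m) \<le> (\<Sum>\<^sub>\<infinity>k. cmod (u k * v (m-k) * twist \<theta> k (m-k)))"
      unfolding nct_mult_def by (rule norm_infsum_bound) (use Ts[of m] in simp)
    then have "om m ^ N * cmod (nct_mult \<theta> u v m) \<le> om m ^ N * (\<Sum>\<^sub>\<infinity>k. cmod (u k * v (m-k) * twist \<theta> k (m-k)))"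
      using om_pos[of m] by (intro mult_left_mono) auto
    also have "\<dots> = (\<Sum>\<^sub>\<infinity>k. om m ^ N * cmod (u k * v (m-k) * twist \<theta> k (m-k)))"
      by (rule infsum_cmult_right'[symmetric])
    also have "\<dots> = infsum (H m) UNIV"
      by (rule infsum_cong) (simp add: H_def norm_mult)
    finally show ?thesis .
  qed
  show ms: "(\<lambda>m. om m ^ N * cmod (nct_mult \<theta> u v m)) summable_on UNIV"
    by (rule summable_on_comparison_test[OF Hout]) (use pt in auto)
  have "nr N (nct_mult \<theta> u v) \<le> (\<Sum>\<^sub>\<infinity>m. infsum (H m) UNIV)"
    unfolding nr_def by (rule infsum_mono[OF ms Hout]) (use pt in auto)
  then show "nr N (nct_mult \<theta> u v) \<le> (\<Sum>\<^sub>\<infinity>(k,l). om (k+l) ^ N * (cmod (u k) * cmod (v l)))"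
    using Hval by (simp add: G_def)
qed

definition tB :: "real^'n::{finite,linorder}^'n::{finite,linorder} \<Rightarrow> int^'n::{finite,linorder} \<Rightarrow> int^'n::{finite,linorder} \<Rightarrow> real" where
  "tB \<theta> k l = (\<Sum>i\<in>UNIV. \<Sum>j\<in>{j. j < i}. \<theta>$j$i * real_of_int (k$i) * real_of_int (l$j))"

lemma twist_tB: "twist \<theta> k l = cis (2 * pi * tB \<theta> k l)"
  by (simp add: twist_def tB_def)

lemma tB_add_left: "tB \<theta> (k + l) r = tB \<theta> k r + tB \<theta> l r"
  by (simp add: tB_def algebra_simps sum.distrib)
lemma tB_add_right: "tB \<theta> k (l + r) = tB \<theta> k l + tB \<theta> k r"
  by (simp add: tB_def algebra_simps sum.distrib)
lemma tB_zero[simp]: "tB \<theta> 0 l = 0" "tB \<theta> k 0 = 0"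
  by (simp_all add: tB_def)

lemma twist_cocycle: "twist \<theta> k l * twist \<theta> (k+l) r = twist \<theta> l r * twist \<theta> k (l+r)"
  by (simp add: twist_tB cis_mult tB_add_left tB_add_right algebra_simps)

lemma twist_zero[simp]: "twist \<theta> 0 l = 1" "twist \<theta> k 0 = 1"
  by (simp_all add: twist_tB)

lemma mult_one_left: "nct_mult \<theta> nct_one v = v"
proof
  fix m
  have "nct_mult \<theta> nct_one v m = (\<Sum>\<^sub>\<infinity>k\<in>{0}. nct_one k * v (m - k) * twist \<theta> k (m - k))"
    unfolding nct_mult_def by (rule infsum_cong_neutral) (auto simp: nct_one_def)
  then show "nct_mult \<theta> nct_one v m = v m" by (simp add: nct_one_def)
qed

lemma mult_one_right: "nct_mult \<theta> v nct_one = v"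
proof
  fix m
  have "nct_mult \<theta> v nct_one m = (\<Sum>\<^sub>\<infinity>k\<in>{m}. v k * nct_one (m - k) * twist \<theta> k (m - k))"
    unfolding nct_mult_def by (rule infsum_cong_neutral) (auto simp: nct_one_def)
  then show "nct_mult \<theta> v nct_one m = v m" by (simp add: nct_one_def)
qed

lemma mult_scal_left: "nct_mult \<theta> (\<lambda>k. c * u k) v = (\<lambda>m. c * nct_mult \<theta> u v m)"
  unfolding nct_mult_def by (simp add: mult.assoc infsum_cmult_right')

lemma mult_scal_right: "nct_mult \<theta> u (\<lambda>k. c * v k) = (\<lambda>m. c * nct_mult \<theta> u v m)"
  unfolding nct_mult_def
  by (subst infsum_cmult_right'[symmetric]) (simp add: algebra_simps)

lemma abs_sum_complex: "(\<lambda>k. cmod (f k)) summable_on A \<Longrightarrow> (f :: _ \<Rightarrow> complex) summable_on A"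
  by (rule abs_summable_summable) simp

lemma sm_term_summable:
  assumes "sm u" "sm v"
  shows "(\<lambda>k. u k * v (m-k) * twist \<theta> k (m-k)) summable_on UNIV"
proof -
  have "(\<lambda>k. om k ^ 0 * cmod (u k)) summable_on UNIV" "(\<lambda>k. om k ^ 0 * cmod (v k)) summable_on UNIV"
    using assms unfolding sm_def by blast+
  from mult_main(2)[OF this] show ?thesis by (rule abs_sum_complex)
qed

lemma mult_add_left:
  assumes "sm u" "sm u'" "sm v"
  shows "nct_mult \<theta> (\<lambda>k. u k + u' k) v = (\<lambda>m. nct_mult \<theta> u v m + nct_mult \<theta> u' v m)"
proof
  fix m
  show "nct_mult \<theta> (\<lambda>k. u k + u' k) v m = nct_mult \<theta> u v m + nct_mult \<theta> u' v m"
    unfolding nct_mult_def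
    using infsum_add[OF sm_term_summable[OF assms(1,3), where \<theta>=\<theta> and m=m] sm_term_summable[OF assms(2,3), where \<theta>=\<theta> and m=m]]
    by (simp add: algebra_simps)
qed

lemma mult_add_right:
  assumes "sm u" "sm v" "sm v'"
  shows "nct_mult \<theta> u (\<lambda>k. v k + v' k) = (\<lambda>m. nct_mult \<theta> u v m + nct_mult \<theta> u v' m)"
proof
  fix m
  show "nct_mult \<theta> u (\<lambda>k. v k + v' k) m = nct_mult \<theta> u v m + nct_mult \<theta> u v' m"
    unfolding nct_mult_def
    using infsum_add[OF sm_term_summable[OF assms(1,2), where \<theta>=\<theta> and m=m] sm_term_summable[OF assms(1,3), where \<theta>=\<theta> and m=m]]
    by (simp add: algebra_simps)
qed

lemma sm_mult:
  fixes u v :: "int^'n::{finite,linorder} \<Rightarrow> complex"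
  assumes "sm u" "sm v"
  shows "sm (nct_mult \<theta> u v)" and "nr N (nct_mult \<theta> u v) \<le> nr N u * nr N v"
proof -
  show "sm (nct_mult \<theta> u v)" unfolding sm_def
    using mult_main(3) assms unfolding sm_def by blast
  have su: "(\<lambda>k. om k ^ N * cmod (u k)) summable_on UNIV" and sv: "(\<lambda>k. om k ^ N * cmod (v k)) summable_on UNIV"
    using assms by (auto simp: sm_def)
  have P: "((\<lambda>(k,l). (om k ^ N * cmod (u k)) * (om l ^ N * cmod (v l))) has_sum (nr N u * nr N v)) UNIV"
    unfolding nr_def by (rule prod_has_sum[OF _ _ su sv]) auto
  have "nr N (nct_mult \<theta> u v) \<le> (\<Sum>\<^sub>\<infinity>(k,l). om (k+l) ^ N * (cmod (u k) * cmod (v l)))"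
    by (rule mult_main(4)[OF su sv])
  also have "\<dots> \<le> (\<Sum>\<^sub>\<infinity>(k,l). (om k ^ N * cmod (u k)) * (om l ^ N * cmod (v l)))"
  proof (rule infsum_mono[OF mult_main(1)[OF su sv] has_sum_imp_summable[OF P]])
    fix x :: "(int^'n::{finite,linorder}) \<times> (int^'n::{finite,linorder})"
    obtain k l where x: "x = (k,l)" by fastforce
    have "om (k+l) ^ N * (cmod (u k) * cmod (v l)) \<le> (om k ^ N * om l ^ N) * (cmod (u k) * cmod (v l))"
      by (rule mult_right_mono[OF om_pow_mult_le]) simp
    then show "(case x of (k, l) \<Rightarrow> om (k + l) ^ N * (cmod (u k) * cmod (v l)))
          \<le> (case x of (k, l) \<Rightarrow> (om k ^ N * cmod (u k)) * (om l ^ N * cmod (v l)))"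
      by (simp add: x algebra_simps)
  qed
  also have "\<dots> = nr N u * nr N v" using P by (simp add: infsumI)
  finally show "nr N (nct_mult \<theta> u v) \<le> nr N u * nr N v" .
qed

lemma nr0_eq: "nr 0 u = (\<Sum>\<^sub>\<infinity>k. cmod (u k))"
  by (simp add: nr_def)

lemma sm_abs: "sm u \<Longrightarrow> (\<lambda>k. cmod (u k)) summable_on UNIV"
  using sm_summable[of u 0] by simp

lemma cmod_le_nr0: "sm u \<Longrightarrow> cmod (u k) \<le> nr 0 u"
  using term_le_nr[of 0 u k] sm_summable[of u 0] by simp

lemma mult_assoc:
  fixes u v w :: "int^'n::{finite,linorder} \<Rightarrow> complex"
  assumes su: "sm u" and sv: "sm v" and sw: "sm w"
  shows "nct_mult \<theta> (nct_mult \<theta> u v) w = nct_mult \<theta> u (nct_mult \<theta> v w)"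
proof
  fix m
  define S where "S k l = u k * v l * w (m - k - l)" for k l
  define c where "c k l = twist \<theta> k l * twist \<theta> (k+l) (m - k - l)" for k l
  have c2: "c k l = twist \<theta> l (m-k-l) * twist \<theta> k (m-k)" for k l
  proof -
    have "c k l = twist \<theta> l (m-k-l) * twist \<theta> k (l + (m-k-l))"
      unfolding c_def by (rule twist_cocycle)
    then show ?thesis by (simp add: algebra_simps)
  qed
  define V where "V x = (\<Sum>\<^sub>\<infinity>l. cmod (v l) * cmod (w (x - l)))" for x
  have Vs: "(\<lambda>l. cmod (v l) * cmod (w (x - l))) summable_on UNIV" for x
  proof -
    have "(\<lambda>k. om k ^ 0 * cmod (v k)) summable_on UNIV" "(\<lambda>k. om k ^ 0 * cmod (w k)) summable_on UNIV"
      using sv sw unfolding sm_def by blast+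
    from mult_main(2)[OF this, where m=x and \<theta>=\<theta>] show ?thesis by (simp add: norm_mult)
  qed
  have Vle: "V x \<le> nr 0 v * nr 0 w" for x
  proof -
    have "V x \<le> (\<Sum>\<^sub>\<infinity>l. cmod (v l) * nr 0 w)"
      unfolding V_def
      by (rule infsum_mono[OF Vs summable_on_cmult_left[OF sm_abs[OF sv]]])
         (use cmod_le_nr0[OF sw] in \<open>auto intro: mult_left_mono\<close>)
    also have "\<dots> = nr 0 v * nr 0 w" by (simp add: infsum_cmult_left' nr0_eq)
    finally show ?thesis .
  qed
  have inner: "((\<lambda>l. cmod (S k l)) has_sum (cmod (u k) * V (m - k))) UNIV" for k
  proof -
    have "((\<lambda>l. cmod (u k) * (cmod (v l) * cmod (w (m - k - l)))) has_sum (cmod (u k) * V (m - k))) UNIV"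
      unfolding V_def by (rule has_sum_cmult_right) (use Vs in simp)
    then show ?thesis by (simp add: S_def norm_mult mult.assoc)
  qed
  have outer: "(\<lambda>k. cmod (u k) * V (m - k)) summable_on UNIV"
  proof (rule summable_on_comparison_test[OF summable_on_cmult_left[OF sm_abs[OF su]]])
    fix k
    show "cmod (u k) * V (m - k) \<le> cmod (u k) * (nr 0 v * nr 0 w)"
      by (rule mult_left_mono[OF Vle]) simp
    show "0 \<le> cmod (u k) * V (m - k)" unfolding V_def by (intro mult_nonneg_nonneg infsum_nonneg) auto
  qed
  have AS: "(\<lambda>(k,l). cmod (S k l)) summable_on Sigma UNIV (\<lambda>_. UNIV)"
    by (rule summable_on_SigmaI[OF _ outer]) (use inner in auto)
  have SC: "(\<lambda>(k,l). S k l * c k l) summable_on UNIV"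
  proof (rule abs_sum_complex)
    show "(\<lambda>x. cmod (case x of (k, l) \<Rightarrow> S k l * c k l)) summable_on UNIV"
      using AS by (simp add: case_prod_unfold norm_mult c_def)
  qed
  have SC': "(\<lambda>(k,l). S k l * c k l) summable_on Sigma UNIV (\<lambda>_. UNIV)"
    using SC by simp
  define F where "F j k = u k * v (j-k) * twist \<theta> k (j-k) * w (m-j) * twist \<theta> j (m-j)" for j k
  have FS: "(\<lambda>(j,k). F j k) = (\<lambda>(j,k). (\<lambda>k l. S k l * c k l) k (j - k))"
    by (auto simp: fun_eq_iff F_def S_def c_def algebra_simps)
  have Fh: "((\<lambda>(j,k). F j k) has_sum (\<Sum>\<^sub>\<infinity>(k,l). S k l * c k l)) UNIV"
  proof -
    have "((\<lambda>(k,l). (\<lambda>k l. S k l * c k l) k l) has_sum (\<Sum>\<^sub>\<infinity>(k,l). S k l * c k l)) UNIV"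
      using SC by (simp add: has_sum_infsum)
    then have "((\<lambda>(j,k). (\<lambda>k l. S k l * c k l) k (j - k)) has_sum (\<Sum>\<^sub>\<infinity>(k,l). S k l * c k l)) UNIV"
      by (rule conv_reindex[THEN iffD2])
    then show ?thesis unfolding FS .
  qed
  have Fs: "(\<lambda>(j,k). F j k) summable_on Sigma UNIV (\<lambda>_. UNIV)"
    using has_sum_imp_summable[OF Fh] by simp
  have "nct_mult \<theta> (nct_mult \<theta> u v) w m = (\<Sum>\<^sub>\<infinity>j. \<Sum>\<^sub>\<infinity>k. F j k)"
    unfolding nct_mult_def F_def
    by (rule infsum_cong) (simp add: infsum_cmult_left'[symmetric] mult.assoc)
  also have "\<dots> = (\<Sum>\<^sub>\<infinity>(j,k)\<in>Sigma UNIV (\<lambda>_. UNIV). F j k)"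
    by (rule infsum_Sigma'_banach[OF Fs])
  also have "\<dots> = (\<Sum>\<^sub>\<infinity>(k,l). S k l * c k l)"
    using Fh infsumI by fastforce
  also have "\<dots> = (\<Sum>\<^sub>\<infinity>k. \<Sum>\<^sub>\<infinity>l. S k l * c k l)"
    using infsum_Sigma'_banach[OF SC'] by simp
  also have "\<dots> = nct_mult \<theta> u (nct_mult \<theta> v w) m"
    unfolding nct_mult_def
  proof (rule infsum_cong)
    fix k
    have "(\<Sum>\<^sub>\<infinity>l. S k l * c k l) = (\<Sum>\<^sub>\<infinity>l. u k * (v l * w (m - k - l) * twist \<theta> l (m - k - l)) * twist \<theta> k (m - k))"
      by (rule infsum_cong) (simp add: S_def c2 algebra_simps)
    also have "\<dots> = u k * (\<Sum>\<^sub>\<infinity>l. v l * w (m - k - l) * twist \<theta> l (m - k - l)) * twist \<theta> k (m - k)"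
      by (simp add: infsum_cmult_left' infsum_cmult_right')
    finally show "(\<Sum>\<^sub>\<infinity>l. S k l * c k l) = u k * (\<Sum>\<^sub>\<infinity>l. v l * w (m - k - l) * twist \<theta> l (m - k - l)) * twist \<theta> k (m - k)" .
  qed
  finally show "nct_mult \<theta> (nct_mult \<theta> u v) w m = nct_mult \<theta> u (nct_mult \<theta> v w) m" .
qed

lemma sm_one: "sm nct_one"
  unfolding sm_def
proof
  fix N
  have "(\<lambda>k::int^'a. om k ^ N * cmod (nct_one k)) summable_on {0}" by simp
  then show "(\<lambda>k::int^'a. om k ^ N * cmod (nct_one k)) summable_on UNIV"
    by (rule summable_on_cong_neutral[THEN iffD1, rotated -1]) (auto simp: nct_one_def)
qed

lemma nr_one: "nr N (nct_one :: int^'n::finite \<Rightarrow> complex) = 1"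
proof -
  have "nr N (nct_one :: int^'n::finite \<Rightarrow> complex) = (\<Sum>\<^sub>\<infinity>k::int^'n\<in>{0}. om k ^ N * cmod (nct_one k))"
    unfolding nr_def by (rule infsum_cong_neutral) (auto simp: nct_one_def)
  also have "\<dots> = 1" by (simp add: nct_one_def om_def)
  finally show ?thesis .
qed

lemma sm_add: assumes "sm u" "sm v" shows "sm (\<lambda>k. u k + v k)"
  unfolding sm_def
proof
  fix N
  have "(\<lambda>k. om k ^ N * cmod (u k) + om k ^ N * cmod (v k)) summable_on UNIV"
    by (rule summable_on_add) (use assms in \<open>simp_all add: sm_def\<close>)
  then have "(\<lambda>k. om k ^ N * (cmod (u k) + cmod (v k))) summable_on UNIV"
    by (simp add: distrib_left)
  then show "(\<lambda>k. om k ^ N * cmod (u k + v k)) summable_on UNIV"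
    by (rule summable_on_comparison_test)
       (auto intro!: mult_left_mono norm_triangle_ineq)
qed

lemma sm_scal: assumes "sm u" shows "sm (\<lambda>k. c * u k)"
  unfolding sm_def
proof
  fix N
  have "(\<lambda>k. cmod c * (om k ^ N * cmod (u k))) summable_on UNIV"
    using assms by (intro summable_on_cmult_right) (auto simp: sm_def)
  then show "(\<lambda>k. om k ^ N * cmod (c * u k)) summable_on UNIV"
    by (simp add: norm_mult algebra_simps)
qed

lemma sm_diff: assumes "sm u" "sm v" shows "sm (\<lambda>k. u k - v k)"
  using sm_add[OF assms(1) sm_scal[OF assms(2), of "-1"]] by simp

lemma nr_add: assumes "sm u" "sm v" shows "nr N (\<lambda>k. u k + v k) \<le> nr N u + nr N v"
proof -
  have s: "(\<lambda>k. om k ^ N * cmod (u k + v k)) summable_on UNIV"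
    using sm_add[OF assms] by (simp add: sm_def)
  have "nr N (\<lambda>k. u k + v k) \<le> (\<Sum>\<^sub>\<infinity>k. om k ^ N * cmod (u k) + om k ^ N * cmod (v k))"
  proof -
    have s2: "(\<lambda>k. om k ^ N * cmod (u k) + om k ^ N * cmod (v k)) summable_on UNIV"
      by (rule summable_on_add) (use assms in \<open>simp_all add: sm_def\<close>)
    show ?thesis unfolding nr_def
      by (rule infsum_mono[OF s s2]) (simp add: distrib_left[symmetric] mult_left_mono norm_triangle_ineq)
  qed
  also have "\<dots> = nr N u + nr N v"
    unfolding nr_def by (rule infsum_add) (use assms in \<open>auto simp: sm_def\<close>)
  finally show ?thesis .
qed

lemma nr_scal: "nr N (\<lambda>k. c * u k) = cmod c * nr N u"
  unfolding nr_def by (simp add: norm_mult mult.left_commute infsum_cmult_right')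

lemma nr_diff: assumes "sm u" "sm v" shows "nr N (\<lambda>k. u k - v k) \<le> nr N u + nr N v"
proof -
  have "nr N (\<lambda>k. u k + (-1) * v k) \<le> nr N u + nr N (\<lambda>k. (-1) * v k)"
    by (rule nr_add[OF assms(1) sm_scal[OF assms(2)]])
  moreover have "nr N (\<lambda>k. (-1) * v k) = nr N v" by (simp only: nr_scal) simp
  ultimately show ?thesis by simp
qed

lemma mult_diff_left:
  assumes "sm u" "sm u'" "sm v"
  shows "nct_mult \<theta> (\<lambda>k. u k - u' k) v = (\<lambda>m. nct_mult \<theta> u v m - nct_mult \<theta> u' v m)"
  using mult_add_left[OF assms(1) sm_scal[OF assms(2), of "-1"] assms(3), of \<theta>]
    mult_scal_left[of \<theta> "-1" u' v] by simp

lemma mult_diff_right: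
  assumes "sm u" "sm v" "sm v'"
  shows "nct_mult \<theta> u (\<lambda>k. v k - v' k) = (\<lambda>m. nct_mult \<theta> u v m - nct_mult \<theta> u v' m)"
  using mult_add_right[OF assms(1,2) sm_scal[OF assms(3), of "-1"], of \<theta>]
    mult_scal_right[of \<theta> u "-1" v'] by simp

lemma convex_pow_est:
  fixes a b n :: real
  assumes "a \<ge> 0" "b \<ge> 0" "n \<ge> 1"
  shows "(a + b) ^ N \<le> (n+1)^N * ((1/(n+1)) * a ^ N + (n/(n+1)) * (b/n) ^ N)"
proof -
  have cv: "convex_on {0..} (\<lambda>x::real. x ^ N)"
  proof (cases "even N")
    case True then show ?thesis using convex_power_even convex_on_subset by blast
  next
    case False then show ?thesis using convex_power_odd by blast
  qed
  define t where "t = n / (n+1)"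
  have t0: "t \<ge> 0" "t \<le> 1" using assms by (auto simp: t_def)
  have "((1 - t) *\<^sub>R a + t *\<^sub>R (b/n)) ^ N \<le> (1 - t) * a ^ N + t * (b/n) ^ N"
    using convex_onD[OF cv t0, of a "b/n"] assms by auto
  have n0: "n \<noteq> 0" "n + 1 \<noteq> 0" using assms by auto
  have t1: "1 - t = 1/(n+1)" using n0 by (simp add: t_def field_simps)
  have t2: "t * (b/n) = b/(n+1)" using n0 by (simp add: t_def)
  moreover have "(1 - t) *\<^sub>R a + t *\<^sub>R (b/n) = (a + b) / (n+1)"
    using t1 t2 by (simp add: add_divide_distrib)
  ultimately have "((a + b) / (n+1)) ^ N \<le> (1/(n+1)) * a ^ N + (n/(n+1)) * (b/n) ^ N"
    using t1 \<open>((1 - t) *\<^sub>R a + t *\<^sub>R (b/n)) ^ N \<le> _\<close> by (simp add: t_def)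
  then have le: "(n+1)^N * ((a + b) / (n+1)) ^ N \<le> (n+1)^N * ((1/(n+1)) * a ^ N + (n/(n+1)) * (b/n) ^ N)"
    using assms by (intro mult_left_mono) auto
  have e: "(n+1)^N * ((a + b) / (n+1)) ^ N = (a+b)^N"
    by (subst power_mult_distrib[symmetric]) (simp add: n0)
  show ?thesis using le unfolding e .
qed

definition pw :: "real^'n::{finite,linorder}^'n::{finite,linorder} \<Rightarrow> (int^'n::{finite,linorder} \<Rightarrow> complex) \<Rightarrow> nat \<Rightarrow> (int^'n::{finite,linorder} \<Rightarrow> complex)" where
  "pw \<theta> d n = ((nct_mult \<theta> d) ^^ n) nct_one"

lemma pw_0[simp]: "pw \<theta> d 0 = nct_one" by (simp add: pw_def)
lemma pw_Suc: "pw \<theta> d (Suc n) = nct_mult \<theta> d (pw \<theta> d n)" by (simp add: pw_def)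

lemma sm_pw: "sm d \<Longrightarrow> sm (pw \<theta> d n)"
  by (induction n) (auto simp: pw_Suc sm_one sm_mult)

lemma nr_pw: "sm d \<Longrightarrow> nr N (pw \<theta> d n) \<le> nr N d ^ n"
proof (induction n)
  case 0 then show ?case by (simp add: nr_one)
next
  case (Suc n)
  have "nr N (pw \<theta> d (Suc n)) \<le> nr N d * nr N (pw \<theta> d n)"
    unfolding pw_Suc by (rule sm_mult(2)[OF Suc.prems sm_pw[OF Suc.prems]])
  also have "\<dots> \<le> nr N d * nr N d ^ n"
    using Suc by (intro mult_left_mono) (auto simp: nr_nonneg)
  finally show ?case by simp
qed

lemma pw_comm: "sm d \<Longrightarrow> nct_mult \<theta> (pw \<theta> d n) d = pw \<theta> d (Suc n)"
proof (induction n)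
  case 0 then show ?case by (simp add: pw_Suc mult_one_left mult_one_right)
next
  case (Suc n)
  have "nct_mult \<theta> (pw \<theta> d (Suc n)) d = nct_mult \<theta> d (nct_mult \<theta> (pw \<theta> d n) d)"
    unfolding pw_Suc by (rule mult_assoc[OF Suc.prems sm_pw[OF Suc.prems] Suc.prems])
  also have "\<dots> = pw \<theta> d (Suc (Suc n))" using Suc by (simp add: pw_Suc)
  finally show ?case .
qed

lemma pair_sum2:
  fixes a1 b1 a2 b2 :: "'a \<Rightarrow> real"
  assumes "\<And>k. a1 k \<ge> 0" "\<And>k. b1 k \<ge> 0" "a1 summable_on UNIV" "b1 summable_on UNIV"
      "\<And>k. a2 k \<ge> 0" "\<And>k. b2 k \<ge> 0" "a2 summable_on UNIV" "b2 summable_on UNIV"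
  shows "((\<lambda>(k,l). c1 * (a1 k * b1 l) + c2 * (a2 k * b2 l)) has_sum
           (c1 * (infsum a1 UNIV * infsum b1 UNIV) + c2 * (infsum a2 UNIV * infsum b2 UNIV))) UNIV"
proof -
  have h1: "((\<lambda>x. c1 * (case x of (k,l) \<Rightarrow> a1 k * b1 l)) has_sum (c1 * (infsum a1 UNIV * infsum b1 UNIV))) UNIV"
    by (rule has_sum_cmult_right[OF prod_has_sum]) (use assms in auto)
  have h2: "((\<lambda>x. c2 * (case x of (k,l) \<Rightarrow> a2 k * b2 l)) has_sum (c2 * (infsum a2 UNIV * infsum b2 UNIV))) UNIV"
    by (rule has_sum_cmult_right[OF prod_has_sum]) (use assms in auto)
  show ?thesis using has_sum_add[OF h1 h2] by (simp add: case_prod_unfold)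
qed

lemma pw_growth:
  fixes d :: "int^'n::{finite,linorder} \<Rightarrow> complex"
  assumes sd: "sm d" and n: "n \<ge> 1"
  shows "nr N (pw \<theta> d n) \<le> real n ^ (N+1) * nr N d * nr 0 d ^ (n-1)"
  using n
proof (induction n rule: dec_induct)
  case base then show ?case by (simp add: pw_Suc mult_one_right)
next
  case (step n)
  define r where "r = real n"
  have r1: "r \<ge> 1" using step by (simp add: r_def)
  define A where "A = nr N d"
  define y where "y = nr 0 d"
  define p where "p = pw \<theta> d n"
  have sp: "sm p" unfolding p_def by (rule sm_pw[OF sd])
  have A0: "A \<ge> 0" "y \<ge> 0" by (auto simp: A_def y_def nr_nonneg)
  have IH: "nr N p \<le> r ^ (N+1) * A * y ^ (n-1)" using step by (simp add: p_def r_def A_def y_def)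
  have P0: "nr 0 p \<le> y ^ n" unfolding p_def y_def by (rule nr_pw[OF sd])
  define c1 where "c1 = (r+1)^N * (1/(r+1))"
  define c2 where "c2 = (r+1)^N * (r/(r+1)) / r ^ N"
  have c0: "c1 \<ge> 0" "c2 \<ge> 0" using r1 by (auto simp: c1_def c2_def)
  have su: "(\<lambda>k. om k ^ N * cmod (d k)) summable_on UNIV" "(\<lambda>k. om k ^ N * cmod (p k)) summable_on UNIV"
    using sd sp by (auto simp: sm_def)
  have su0: "(\<lambda>k. cmod (d k)) summable_on UNIV" "(\<lambda>k. cmod (p k)) summable_on UNIV"
    using sm_abs[OF sd] sm_abs[OF sp] by auto
  have H: "((\<lambda>(k,l). c1 * ((om k ^ N * cmod (d k)) * cmod (p l)) + c2 * (cmod (d k) * (om l ^ N * cmod (p l)))) has_sum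
           (c1 * (A * nr 0 p) + c2 * (y * nr N p))) UNIV"
    using pair_sum2[of "\<lambda>k. om k ^ N * cmod (d k)" "\<lambda>k. cmod (p k)" "\<lambda>k. cmod (d k)" "\<lambda>k. om k ^ N * cmod (p k)" c1 c2]
      su su0 by (simp add: A_def y_def nr_def)
  have pt: "om (k+l) ^ N * (cmod (d k) * cmod (p l)) \<le>
      c1 * ((om k ^ N * cmod (d k)) * cmod (p l)) + c2 * (cmod (d k) * (om l ^ N * cmod (p l)))" for k l
  proof -
    have "om (k+l) ^ N \<le> (om k + om l) ^ N"
      by (rule power_mono[OF om_add_le]) simp
    also have "\<dots> \<le> (r+1)^N * ((1/(r+1)) * om k ^ N + (r/(r+1)) * (om l / r) ^ N)"
      by (rule convex_pow_est) (use r1 in auto)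
    also have "\<dots> = c1 * om k ^ N + c2 * om l ^ N"
      by (simp add: c1_def c2_def power_divide algebra_simps)
    finally have "om (k+l) ^ N \<le> c1 * om k ^ N + c2 * om l ^ N" .
    then have "om (k+l) ^ N * (cmod (d k) * cmod (p l)) \<le> (c1 * om k ^ N + c2 * om l ^ N) * (cmod (d k) * cmod (p l))"
      by (rule mult_right_mono) simp
    then show ?thesis by (simp add: algebra_simps)
  qed
  have "nr N (pw \<theta> d (Suc n)) \<le> (\<Sum>\<^sub>\<infinity>(k,l). om (k+l) ^ N * (cmod (d k) * cmod (p l)))"
    unfolding pw_Suc p_def[symmetric] by (rule mult_main(4)[OF su])
  also have "\<dots> \<le> c1 * (A * nr 0 p) + c2 * (y * nr N p)"
  proof (rule infsum_mono[OF mult_main(1)[OF su] has_sum_imp_summable[OF H], THEN order_trans])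
    fix x :: "(int^'n::{finite,linorder}) \<times> (int^'n::{finite,linorder})"
    obtain k l where x: "x = (k,l)" by fastforce
    show "(case x of (k, l) \<Rightarrow> om (k + l) ^ N * (cmod (d k) * cmod (p l)))
       \<le> (case x of (k,l) \<Rightarrow> c1 * ((om k ^ N * cmod (d k)) * cmod (p l)) + c2 * (cmod (d k) * (om l ^ N * cmod (p l))))"
      using pt[of k l] by (simp add: x)
  next
    show "(\<Sum>\<^sub>\<infinity>(k,l). c1 * ((om k ^ N * cmod (d k)) * cmod (p l)) + c2 * (cmod (d k) * (om l ^ N * cmod (p l))))
        \<le> c1 * (A * nr 0 p) + c2 * (y * nr N p)"
      using H by (simp add: infsumI)
  qed
  also have "\<dots> \<le> c1 * (A * y ^ n) + c2 * (y * (r ^ (N+1) * A * y ^ (n-1)))"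
    using A0 c0 P0 IH by (intro add_mono mult_left_mono) auto
  also have "\<dots> = A * y ^ n * (c1 + c2 * r ^ (N+1))"
  proof -
    have "y * y ^ (n-1) = y ^ n" using step by (cases n) auto
    then show ?thesis by (simp add: algebra_simps)
  qed
  also have "\<dots> \<le> A * y ^ n * (r+1) ^ (N+1)"
  proof (rule mult_left_mono)
    have gen0: "x / q * (q * r) = x * r" if "q \<noteq> 0" for x q :: real using that by simp
    have gen: "\<And>q::real. q > 0 \<Longrightarrow> (r+1)^N * (r/(r+1)) / q * (q * r) = (r+1)^N * (r * r / (r+1))"
      using gen0 by simp
    have "c2 * r ^ (N+1) = (r+1)^N * (r/(r+1)) / r^N * (r^N * r)"
      by (simp add: c2_def mult.commute)
    also have "\<dots> = (r+1)^N * (r * r / (r+1))" by (rule gen) (use r1 in simp)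
    finally have "c2 * r ^ (N+1) = (r+1)^N * (r * r / (r+1))" .
    then have "c1 + c2 * r ^ (N+1) = (r+1)^N * ((1 + r*r) / (r+1))"
      using r1 by (simp add: c1_def field_simps)
    also have "\<dots> \<le> (r+1)^N * (r+1)"
    proof (rule mult_left_mono)
      show "(1 + r*r) / (r+1) \<le> r + 1" using r1 by (simp add: field_simps)
    qed (use r1 in simp)
    finally show "c1 + c2 * r ^ (N+1) \<le> (r+1) ^ (N+1)" by (simp add: mult.commute)
  qed (use A0 in simp)
  also have "\<dots> = real (Suc n) ^ (N+1) * nr N d * nr 0 d ^ (Suc n - 1)"
    by (simp add: r_def A_def y_def algebra_simps)
  finally show ?case .
qed

lemma root_Suc_lim: "(\<lambda>n. root n (real (Suc n))) \<longlonglongrightarrow> 1"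
proof (rule tendsto_sandwich[where f="\<lambda>_. 1" and h="\<lambda>n. root n 2 * root n (real n)"])
  show "\<forall>\<^sub>F n in sequentially. 1 \<le> root n (real (Suc n))"
    using eventually_gt_at_top[of "0::nat"] by eventually_elim auto
  show "\<forall>\<^sub>F n in sequentially. root n (real (Suc n)) \<le> root n 2 * root n (real n)"
    using eventually_gt_at_top[of "0::nat"]
  proof eventually_elim
    case (elim n)
    have "root n (real (Suc n)) \<le> root n (2 * real n)"
      using elim by (intro real_root_le_mono) auto
    then show ?case by (simp add: real_root_mult)
  qed
  show "(\<lambda>n. root n 2 * root n (real n)) \<longlonglongrightarrow> 1"
    using tendsto_mult[OF LIMSEQ_root_const[of 2] LIMSEQ_root] by simp
qed simp

lemma poly_geom_summable:
  fixes y B :: real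
  assumes "0 \<le> y" "y < 1" "B > 0"
  shows "summable (\<lambda>n. real (Suc n) ^ p * B * y ^ n)"
proof (rule root_test_convergence)
  have "(\<lambda>n. root n (real (Suc n)) ^ p * root n B * y) \<longlonglongrightarrow> 1 ^ p * 1 * y"
    by (intro tendsto_intros root_Suc_lim LIMSEQ_root_const assms)
  moreover have "\<forall>\<^sub>F n in sequentially. root n (real (Suc n)) ^ p * root n B * y = root n (norm (real (Suc n) ^ p * B * y ^ n))"
    using eventually_gt_at_top[of "0::nat"]
  proof eventually_elim
    case (elim n)
    have "root n (norm (real (Suc n) ^ p * B * y ^ n)) = root n (real (Suc n) ^ p) * root n B * root n (y ^ n)"
      using assms by (simp add: real_root_mult abs_mult)
    also have "\<dots> = root n (real (Suc n)) ^ p * root n B * y"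
      using elim assms by (simp add: real_root_power real_root_power_cancel)
    finally show ?case by simp
  qed
  ultimately show "(\<lambda>n. root n (norm (real (Suc n) ^ p * B * y ^ n))) \<longlonglongrightarrow> y"
    using Lim_transform_eventually by fastforce
qed (use assms in simp)

lemma pw_nr_summable:
  fixes d :: "int^'n::{finite,linorder} \<Rightarrow> complex"
  assumes sd: "sm d" and y1: "nr 0 d < 1"
  shows "(\<lambda>n. nr N (pw \<theta> d n)) summable_on UNIV"
proof -
  have g: "summable (\<lambda>n. real (Suc n) ^ (N+1) * (nr N d + 1) * nr 0 d ^ n)"
    by (rule poly_geom_summable) (use y1 nr_nonneg[of N d] nr_nonneg[of 0 d] in auto)
  have "summable (\<lambda>n. nr N (pw \<theta> d (Suc n)))"
  proof (rule summable_comparison_test'[OF g])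
    fix n :: nat
    have "nr N (pw \<theta> d (Suc n)) \<le> real (Suc n) ^ (N+1) * nr N d * nr 0 d ^ n"
      using pw_growth[OF sd, of "Suc n" N \<theta>] by simp
    also have "\<dots> \<le> real (Suc n) ^ (N+1) * (nr N d + 1) * nr 0 d ^ n"
      by (intro mult_right_mono mult_left_mono) (auto simp: nr_nonneg)
    finally show "norm (nr N (pw \<theta> d (Suc n))) \<le> real (Suc n) ^ (N+1) * (nr N d + 1) * nr 0 d ^ n"
      by (simp add: nr_nonneg)
  qed
  then have "summable (\<lambda>n. nr N (pw \<theta> d n))" by (subst (asm) summable_Suc_iff)
  then show ?thesis by (subst summable_on_UNIV_nonneg_real_iff) (auto simp: nr_nonneg)
qed

lemma ser_mult_left:
  fixes e :: "int^'n::{finite,linorder} \<Rightarrow> complex" and q :: "nat \<Rightarrow> int^'n::{finite,linorder} \<Rightarrow> complex"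
  assumes se: "sm e" and sq: "\<And>n. sm (q n)" and qs: "(\<lambda>n. nr 0 (q n)) summable_on UNIV"
  shows "nct_mult \<theta> e (\<lambda>m. \<Sum>\<^sub>\<infinity>n. q n m) = (\<lambda>m. \<Sum>\<^sub>\<infinity>n. nct_mult \<theta> e (q n) m)"
proof
  fix m
  define Tq where "Tq = (\<Sum>\<^sub>\<infinity>n. nr 0 (q n))"
  have qx: "(\<lambda>n. cmod (q n x)) summable_on UNIV" for x
    by (rule summable_on_comparison_test[OF qs]) (use cmod_le_nr0[OF sq] in auto)
  define R where "R x = (\<Sum>\<^sub>\<infinity>n. cmod (q n x))" for x
  have Rle: "R x \<le> Tq" for x
    unfolding R_def Tq_def by (rule infsum_mono[OF qx qs]) (use cmod_le_nr0[OF sq] in auto)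
  have R0: "R x \<ge> 0" for x unfolding R_def by (rule infsum_nonneg) auto
  have inner: "((\<lambda>n. cmod (e k) * cmod (q n (m-k))) has_sum (cmod (e k) * R (m-k))) UNIV" for k
    unfolding R_def by (rule has_sum_cmult_right) (use qx in simp)
  have outer: "(\<lambda>k. cmod (e k) * R (m-k)) summable_on UNIV"
    by (rule summable_on_comparison_test[OF summable_on_cmult_left[OF sm_abs[OF se], of Tq]])
       (use Rle R0 in \<open>auto intro: mult_left_mono\<close>)
  have AS: "(\<lambda>(k,n). cmod (e k) * cmod (q n (m-k))) summable_on Sigma UNIV (\<lambda>_. UNIV)"
    by (rule summable_on_SigmaI[OF _ outer]) (use inner in auto)
  have CS: "(\<lambda>(k,n). e k * q n (m-k) * twist \<theta> k (m-k)) summable_on UNIV \<times> UNIV"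
  proof (rule abs_sum_complex)
    show "(\<lambda>x. cmod (case x of (k, n) \<Rightarrow> e k * q n (m - k) * twist \<theta> k (m - k))) summable_on UNIV \<times> UNIV"
      using AS by (simp add: case_prod_unfold norm_mult)
  qed
  have "nct_mult \<theta> e (\<lambda>m. \<Sum>\<^sub>\<infinity>n. q n m) m = (\<Sum>\<^sub>\<infinity>k. \<Sum>\<^sub>\<infinity>n. e k * q n (m-k) * twist \<theta> k (m-k))"
    unfolding nct_mult_def by (rule infsum_cong) (simp add: infsum_cmult_left' infsum_cmult_right')
  also have "\<dots> = (\<Sum>\<^sub>\<infinity>n. \<Sum>\<^sub>\<infinity>k. e k * q n (m-k) * twist \<theta> k (m-k))"
    by (rule infsum_swap_banach) (use CS in simp)
  also have "\<dots> = (\<Sum>\<^sub>\<infinity>n. nct_mult \<theta> e (q n) m)" by (simp add: nct_mult_def)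
  finally show "nct_mult \<theta> e (\<lambda>m. \<Sum>\<^sub>\<infinity>n. q n m) m = (\<Sum>\<^sub>\<infinity>n. nct_mult \<theta> e (q n) m)" .
qed

lemma ser_mult_right:
  fixes e :: "int^'n::{finite,linorder} \<Rightarrow> complex" and q :: "nat \<Rightarrow> int^'n::{finite,linorder} \<Rightarrow> complex"
  assumes se: "sm e" and sq: "\<And>n. sm (q n)" and qs: "(\<lambda>n. nr 0 (q n)) summable_on UNIV"
  shows "nct_mult \<theta> (\<lambda>m. \<Sum>\<^sub>\<infinity>n. q n m) e = (\<lambda>m. \<Sum>\<^sub>\<infinity>n. nct_mult \<theta> (q n) e m)"
proof
  fix m
  have Ws: "(\<lambda>k. cmod (q n k) * cmod (e (m-k))) summable_on UNIV" for n
  proof -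
    have "(\<lambda>k. om k ^ 0 * cmod (q n k)) summable_on UNIV" "(\<lambda>k. om k ^ 0 * cmod (e k)) summable_on UNIV"
      using sq se unfolding sm_def by blast+
    from mult_main(2)[OF this, where m=m and \<theta>=\<theta>] show ?thesis by (simp add: norm_mult)
  qed
  define W where "W n = (\<Sum>\<^sub>\<infinity>k. cmod (q n k) * cmod (e (m-k)))" for n
  have Wle: "W n \<le> nr 0 (q n) * nr 0 e" for n
  proof -
    have "W n \<le> (\<Sum>\<^sub>\<infinity>k. cmod (q n k) * nr 0 e)"
      unfolding W_def
      by (rule infsum_mono[OF Ws summable_on_cmult_left[OF sm_abs[OF sq]]])
         (use cmod_le_nr0[OF se] in \<open>auto intro: mult_left_mono\<close>)
    also have "\<dots> = nr 0 (q n) * nr 0 e" by (simp add: infsum_cmult_left' nr0_eq)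
    finally show ?thesis .
  qed
  have W0: "W n \<ge> 0" for n unfolding W_def by (rule infsum_nonneg) auto
  have outer: "W summable_on UNIV"
    by (rule summable_on_comparison_test[OF summable_on_cmult_left[OF qs, of "nr 0 e"]])
       (use Wle W0 in auto)
  have AS: "(\<lambda>(n,k). cmod (q n k) * cmod (e (m-k))) summable_on Sigma UNIV (\<lambda>_. UNIV)"
    by (rule summable_on_SigmaI[OF _ outer]) (use Ws in \<open>auto simp: W_def\<close>)
  have CS: "(\<lambda>(n,k). q n k * e (m-k) * twist \<theta> k (m-k)) summable_on UNIV \<times> UNIV"
  proof (rule abs_sum_complex)
    show "(\<lambda>x. cmod (case x of (n, k) \<Rightarrow> q n k * e (m - k) * twist \<theta> k (m - k))) summable_on UNIV \<times> UNIV"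
      using AS by (simp add: case_prod_unfold norm_mult)
  qed
  have CS': "(\<lambda>(k,n). q n k * e (m-k) * twist \<theta> k (m-k)) summable_on UNIV \<times> UNIV"
    using CS by (subst summable_on_swap) (simp add: case_prod_unfold)
  have "nct_mult \<theta> (\<lambda>m. \<Sum>\<^sub>\<infinity>n. q n m) e m = (\<Sum>\<^sub>\<infinity>k. \<Sum>\<^sub>\<infinity>n. q n k * e (m-k) * twist \<theta> k (m-k))"
    unfolding nct_mult_def by (rule infsum_cong) (simp add: infsum_cmult_left')
  also have "\<dots> = (\<Sum>\<^sub>\<infinity>n. \<Sum>\<^sub>\<infinity>k. q n k * e (m-k) * twist \<theta> k (m-k))"
    by (rule infsum_swap_banach) (use CS' in simp)
  also have "\<dots> = (\<Sum>\<^sub>\<infinity>n. nct_mult \<theta> (q n) e m)" by (simp add: nct_mult_def)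
  finally show "nct_mult \<theta> (\<lambda>m. \<Sum>\<^sub>\<infinity>n. q n m) e m = (\<Sum>\<^sub>\<infinity>n. nct_mult \<theta> (q n) e m)" .
qed

lemma infsum_nat_head:
  fixes f :: "nat \<Rightarrow> complex"
  assumes "f summable_on UNIV"
  shows "infsum f UNIV = f 0 + infsum (\<lambda>n. f (Suc n)) UNIV"
proof -
  have s: "summable f" using summable_on_imp_summable[OF assms] .
  have "f summable_on range Suc" by (rule summable_on_subset_banach[OF assms]) auto
  then have s2: "(\<lambda>n. f (Suc n)) summable_on UNIV"
    by (subst (asm) summable_on_reindex) (auto simp: o_def)
  have e1: "infsum f UNIV = suminf f"
    using has_sum_imp_sums[OF has_sum_infsum[OF assms]] sums_unique by metis
  have e2: "infsum (\<lambda>n. f (Suc n)) UNIV = (\<Sum>n. f (Suc n))"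
    using has_sum_imp_sums[OF has_sum_infsum[OF s2]] sums_unique by metis
  show ?thesis unfolding e1 e2 suminf_split_head[OF s] by simp
qed

lemma neumann:
  fixes d :: "int^'n::{finite,linorder} \<Rightarrow> complex"
  assumes sd: "sm d" and y1: "nr 0 d < 1"
  shows "\<exists>s. sm s \<and> nct_mult \<theta> (\<lambda>k. nct_one k - d k) s = nct_one \<and>
             nct_mult \<theta> s (\<lambda>k. nct_one k - d k) = nct_one \<and> nr 0 s \<le> 1 / (1 - nr 0 d)"
proof -
  define q where "q = pw \<theta> d"
  have sq: "sm (q n)" for n unfolding q_def by (rule sm_pw[OF sd])
  have qsN: "(\<lambda>n. nr N (q n)) summable_on UNIV" for N
    unfolding q_def by (rule pw_nr_summable[OF sd y1])
  have qx: "(\<lambda>n. cmod (q n x)) summable_on UNIV" for x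
    by (rule summable_on_comparison_test[OF qsN[of 0]]) (use cmod_le_nr0[OF sq] in auto)
  have qxc: "(\<lambda>n. q n x) summable_on UNIV" for x by (rule abs_sum_complex[OF qx])
  define s where "s m = (\<Sum>\<^sub>\<infinity>n. q n m)" for m
  have smN: "(\<lambda>m. om m ^ N * cmod (s m)) summable_on UNIV \<and> nr N s \<le> (\<Sum>\<^sub>\<infinity>n. nr N (q n))" for N
  proof -
    have inner: "((\<lambda>m. om m ^ N * cmod (q n m)) has_sum nr N (q n)) UNIV" for n
      unfolding nr_def by (rule has_sum_infsum[OF sm_summable[OF sq]])
    have AS2: "(\<lambda>(n,m). om m ^ N * cmod (q n m)) summable_on Sigma UNIV (\<lambda>_. UNIV)"
      by (rule summable_on_SigmaI[OF _ qsN[of N]]) (use inner in auto)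
    have AS3: "(\<lambda>(m,n). om m ^ N * cmod (q n m)) summable_on Sigma UNIV (\<lambda>_. UNIV)"
      using AS2 by (subst (asm) summable_on_swap) (simp add: case_prod_unfold)
    have in3: "(\<lambda>n. om m ^ N * cmod (q n m)) summable_on UNIV" for m
      using summable_on_SigmaD1[OF AS3] by simp
    have out3: "(\<lambda>m. \<Sum>\<^sub>\<infinity>n. om m ^ N * cmod (q n m)) summable_on UNIV"
      using summable_on_SigmaD[of "\<lambda>(m,n). om m ^ N * cmod (q n m)" UNIV "\<lambda>_. UNIV"] AS3 in3 by simp
    have val: "(\<Sum>\<^sub>\<infinity>m. \<Sum>\<^sub>\<infinity>n. om m ^ N * cmod (q n m)) = (\<Sum>\<^sub>\<infinity>n. nr N (q n))"
    proof -
      have "(\<Sum>\<^sub>\<infinity>m. \<Sum>\<^sub>\<infinity>n. om m ^ N * cmod (q n m)) = (\<Sum>\<^sub>\<infinity>n. \<Sum>\<^sub>\<infinity>m. om m ^ N * cmod (q n m))"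
        by (rule infsum_swap_banach) (use AS3 in simp)
      then show ?thesis by (simp add: nr_def)
    qed
    have pt: "om m ^ N * cmod (s m) \<le> (\<Sum>\<^sub>\<infinity>n. om m ^ N * cmod (q n m))" for m
    proof -
      have "cmod (s m) \<le> (\<Sum>\<^sub>\<infinity>n. cmod (q n m))"
        unfolding s_def by (rule norm_infsum_bound) (use qx in simp)
      then have "om m ^ N * cmod (s m) \<le> om m ^ N * (\<Sum>\<^sub>\<infinity>n. cmod (q n m))"
        by (rule mult_left_mono) simp
      then show ?thesis by (simp add: infsum_cmult_right')
    qed
    have ms: "(\<lambda>m. om m ^ N * cmod (s m)) summable_on UNIV"
      by (rule summable_on_comparison_test[OF out3]) (use pt in auto)
    have "nr N s \<le> (\<Sum>\<^sub>\<infinity>m. \<Sum>\<^sub>\<infinity>n. om m ^ N * cmod (q n m))"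
      unfolding nr_def by (rule infsum_mono[OF ms out3]) (use pt in auto)
    with ms val show ?thesis by simp
  qed
  have ss: "sm s" unfolding sm_def using smN by blast
  define y where "y = nr 0 d"
  have y0: "0 \<le> y" "y < 1" using y1 nr_nonneg by (auto simp: y_def)
  have geo: "((\<lambda>n. y ^ n) has_sum (1 / (1 - y))) UNIV"
    by (rule sums_nonneg_imp_has_sum[OF geometric_sums]) (use y0 in auto)
  have "nr 0 s \<le> (\<Sum>\<^sub>\<infinity>n. nr 0 (q n))" using smN[of 0] by simp
  also have "\<dots> \<le> (\<Sum>\<^sub>\<infinity>n. y ^ n)"
    by (rule infsum_mono[OF qsN has_sum_imp_summable[OF geo]]) (use nr_pw[OF sd] in \<open>auto simp: q_def y_def\<close>)
  also have "\<dots> = 1 / (1 - y)" using geo by (simp add: infsumI)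
  finally have nrs: "nr 0 s \<le> 1 / (1 - nr 0 d)" by (simp add: y_def)
  have shift: "(\<lambda>m. s m - (\<Sum>\<^sub>\<infinity>n. q (Suc n) m)) = nct_one"
  proof
    fix m show "s m - (\<Sum>\<^sub>\<infinity>n. q (Suc n) m) = nct_one m"
      unfolding s_def using infsum_nat_head[OF qxc[of m]] by (simp add: q_def)
  qed
  have L: "nct_mult \<theta> (\<lambda>k. nct_one k - d k) s = nct_one"
  proof -
    have "nct_mult \<theta> (\<lambda>k. nct_one k - d k) s = (\<lambda>m. nct_mult \<theta> nct_one s m - nct_mult \<theta> d s m)"
      by (rule mult_diff_left[OF sm_one sd ss])
    also have "nct_mult \<theta> d s = (\<lambda>m. \<Sum>\<^sub>\<infinity>n. nct_mult \<theta> d (q n) m)"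
      unfolding s_def[abs_def] by (rule ser_mult_left[OF sd sq qsN])
    also have "\<dots> = (\<lambda>m. \<Sum>\<^sub>\<infinity>n. q (Suc n) m)" by (simp add: q_def pw_Suc)
    finally show ?thesis using shift by (simp add: mult_one_left)
  qed
  have R: "nct_mult \<theta> s (\<lambda>k. nct_one k - d k) = nct_one"
  proof -
    have "nct_mult \<theta> s (\<lambda>k. nct_one k - d k) = (\<lambda>m. nct_mult \<theta> s nct_one m - nct_mult \<theta> s d m)"
      by (rule mult_diff_right[OF ss sm_one sd])
    also have "nct_mult \<theta> s d = (\<lambda>m. \<Sum>\<^sub>\<infinity>n. nct_mult \<theta> (q n) d m)"
      unfolding s_def[abs_def] by (rule ser_mult_right[OF sd sq qsN])
    also have "\<dots> = (\<lambda>m. \<Sum>\<^sub>\<infinity>n. q (Suc n) m)" by (simp add: q_def pw_comm[OF sd])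
    finally show ?thesis using shift by (simp add: mult_one_right)
  qed
  show ?thesis using ss L R nrs by blast
qed

definition ip :: "real^'n::{finite,linorder}^'n::{finite,linorder} \<Rightarrow> (int^'n::{finite,linorder} \<Rightarrow> complex) \<Rightarrow> (int^'n::{finite,linorder} \<Rightarrow> complex) \<Rightarrow> bool" where
  "ip \<theta> a c \<longleftrightarrow> sm a \<and> sm c \<and> nct_mult \<theta> a c = nct_one \<and> nct_mult \<theta> c a = nct_one"

lemma invertible_ip: "nct_invertible \<theta> a \<longleftrightarrow> (\<exists>c. ip \<theta> a c)"
  unfolding nct_invertible_def ip_def Bex_def smooth_iff by auto

lemma ip_scal:
  assumes "ip \<theta> a c" "r \<noteq> 0"
  shows "ip \<theta> (\<lambda>k. r * a k) (\<lambda>k. inverse r * c k)"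
  using assms unfolding ip_def
  by (auto simp: sm_scal mult_scal_left mult_scal_right)

lemma perturb:
  fixes a b c :: "int^'n::{finite,linorder} \<Rightarrow> complex"
  assumes ac: "ip \<theta> a c" and sb: "sm b" and small: "nr 0 b * nr 0 c \<le> 1/2"
  shows "\<exists>c'. ip \<theta> (\<lambda>k. a k + b k) c' \<and> nr 0 c' \<le> 2 * nr 0 c"
proof -
  have sa: "sm a" and sc: "sm c" and ac1: "nct_mult \<theta> a c = nct_one" and ca1: "nct_mult \<theta> c a = nct_one"
    using ac by (auto simp: ip_def)
  define cb where "cb = nct_mult \<theta> c b"
  have scb: "sm cb" unfolding cb_def by (rule sm_mult(1)[OF sc sb])
  define d where "d k = (-1) * cb k" for k
  have sd: "sm d" unfolding d_def by (rule sm_scal[OF scb])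
  have nd: "nr 0 d \<le> 1/2"
  proof -
    have "nr 0 d = nr 0 cb" unfolding d_def[abs_def] nr_scal by simp
    also have "\<dots> \<le> nr 0 c * nr 0 b" unfolding cb_def by (rule sm_mult(2)[OF sc sb])
    finally show ?thesis using small by (simp add: mult.commute)
  qed
  obtain s where ss: "sm s" and Es: "nct_mult \<theta> (\<lambda>k. nct_one k - d k) s = nct_one"
    and sE: "nct_mult \<theta> s (\<lambda>k. nct_one k - d k) = nct_one" and ns: "nr 0 s \<le> 1 / (1 - nr 0 d)"
  proof -
    have "nr 0 d < 1" using nd by simp
    from neumann[OF sd this, of \<theta>] show ?thesis using that by blast
  qed
  define E where "E k = nct_one k - d k" for k
  have sE': "sm E" unfolding E_def by (rule sm_diff[OF sm_one sd])
  have aE: "nct_mult \<theta> a E = (\<lambda>k. a k + b k)"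
  proof -
    have "nct_mult \<theta> a E = (\<lambda>m. nct_mult \<theta> a nct_one m - nct_mult \<theta> a d m)"
      unfolding E_def by (rule mult_diff_right[OF sa sm_one sd])
    moreover have "nct_mult \<theta> a d = (\<lambda>m. (-1) * nct_mult \<theta> a cb m)"
      unfolding d_def by (rule mult_scal_right)
    moreover have "nct_mult \<theta> a cb = b"
      unfolding cb_def by (simp add: mult_assoc[OF sa sc sb, symmetric] ac1 mult_one_left)
    ultimately show ?thesis by (simp add: mult_one_right)
  qed
  have sab: "sm (\<lambda>k. a k + b k)" by (rule sm_add[OF sa sb])
  define c' where "c' = nct_mult \<theta> s c"
  have sc': "sm c'" unfolding c'_def by (rule sm_mult(1)[OF ss sc])
  have r1: "nct_mult \<theta> (\<lambda>k. a k + b k) c' = nct_one"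
  proof -
    have "nct_mult \<theta> (\<lambda>k. a k + b k) c' = nct_mult \<theta> (nct_mult \<theta> a E) (nct_mult \<theta> s c)"
      by (simp add: aE c'_def)
    also have "\<dots> = nct_mult \<theta> a (nct_mult \<theta> E (nct_mult \<theta> s c))"
      by (rule mult_assoc[OF sa sE' sm_mult(1)[OF ss sc]])
    also have "nct_mult \<theta> E (nct_mult \<theta> s c) = nct_mult \<theta> (nct_mult \<theta> E s) c"
      by (rule mult_assoc[OF sE' ss sc, symmetric])
    also have "nct_mult \<theta> E s = nct_one" using Es by (simp add: E_def[abs_def])
    finally show ?thesis by (simp add: mult_one_left ac1)
  qed
  have r2: "nct_mult \<theta> c' (\<lambda>k. a k + b k) = nct_one"
  proof -
    have "nct_mult \<theta> c' (\<lambda>k. a k + b k) = nct_mult \<theta> (nct_mult \<theta> s c) (nct_mult \<theta> a E)"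
      by (simp add: aE c'_def)
    also have "\<dots> = nct_mult \<theta> s (nct_mult \<theta> c (nct_mult \<theta> a E))"
      by (rule mult_assoc[OF ss sc sm_mult(1)[OF sa sE']])
    also have "nct_mult \<theta> c (nct_mult \<theta> a E) = nct_mult \<theta> (nct_mult \<theta> c a) E"
      by (rule mult_assoc[OF sc sa sE', symmetric])
    also have "nct_mult \<theta> s (nct_mult \<theta> (nct_mult \<theta> c a) E) = nct_one"
      using sE by (simp add: ca1 mult_one_left E_def[abs_def])
    finally show ?thesis .
  qed
  have "nr 0 c' \<le> nr 0 s * nr 0 c" unfolding c'_def by (rule sm_mult(2)[OF ss sc])
  also have "\<dots> \<le> 2 * nr 0 c"
  proof (rule mult_right_mono)
    have "1 / (1 - nr 0 d) \<le> 2"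
    proof -
      have "1 - nr 0 d \<ge> 1/2" using nd by simp
      then have "1 / (1 - nr 0 d) \<le> 1 / (1/2)" using nd by (intro divide_left_mono) auto
      then show ?thesis by simp
    qed
    then show "nr 0 s \<le> 2" using ns by simp
  qed (simp add: nr_nonneg)
  finally have "nr 0 c' \<le> 2 * nr 0 c" .
  moreover have "ip \<theta> (\<lambda>k. a k + b k) c'" unfolding ip_def using sab sc' r1 r2 by simp
  ultimately show ?thesis by blast
qed

lemma mvt_axis:
  fixes g :: "real^'n::finite \<Rightarrow> complex" and D :: "real^'n \<Rightarrow> complex"
  assumes deriv: "\<And>\<xi>. \<xi> \<in> S \<Longrightarrow> ((\<lambda>t. g (\<xi> + t *\<^sub>R axis i 1)) has_vector_derivative D \<xi>) (at 0)"
    and seg: "\<And>t. t \<in> {0..1} \<Longrightarrow> p + (t * h) *\<^sub>R axis i 1 \<in> S"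
    and bnd: "\<And>\<xi>. \<xi> \<in> S \<Longrightarrow> cmod (D \<xi>) \<le> B"
  shows "cmod (g (p + h *\<^sub>R axis i 1) - g p) \<le> B * \<bar>h\<bar>"
proof -
  define \<phi> where "\<phi> t = g (p + (t * h) *\<^sub>R axis i 1)" for t
  define V where "V t = h *\<^sub>R D (p + (t*h) *\<^sub>R axis i 1)" for t
  have d\<phi>: "(\<phi> has_vector_derivative V t) (at t)" if "t \<in> {0..1}" for t
  proof -
    define q where "q = p + (t*h) *\<^sub>R axis i 1"
    have d1: "((\<lambda>s. (s - t) * h) has_vector_derivative h) (at t)"
      unfolding has_real_derivative_iff_has_vector_derivative[symmetric]
      by (auto intro!: derivative_eq_intros)
    have d2: "((\<lambda>s. g (q + s *\<^sub>R axis i 1)) has_vector_derivative D q) (at ((\<lambda>s. (s - t) * h) t))"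
      using deriv[of q] seg[OF that] by (simp add: q_def)
    have "((\<lambda>s. g (q + s *\<^sub>R axis i 1)) \<circ> (\<lambda>s. (s - t) * h) has_vector_derivative h *\<^sub>R D q) (at t)"
      by (rule vector_diff_chain_at[OF d1 d2])
    moreover have "(\<lambda>s. g (q + s *\<^sub>R axis i 1)) \<circ> (\<lambda>s. (s - t) * h) = \<phi>"
    proof
      fix s
      have "q + ((s - t) * h) *\<^sub>R axis i 1 = p + (s * h) *\<^sub>R axis i 1"
        by (simp add: q_def algebra_simps scaleR_left_diff_distrib)
      then show "((\<lambda>s. g (q + s *\<^sub>R axis i 1)) \<circ> (\<lambda>s. (s - t) * h)) s = \<phi> s"
        by (simp add: \<phi>_def)
    qed
    ultimately show ?thesis by (simp add: V_def q_def)
  qed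
  have "norm (\<phi> 1 - \<phi> 0) \<le> (\<bar>h\<bar> * B) * norm (1 - (0::real))"
  proof (rule differentiable_bound[where f'="\<lambda>t x. x *\<^sub>R V t"])
    show "convex {0..1::real}" by simp
    show "(\<phi> has_derivative (\<lambda>x. x *\<^sub>R V t)) (at t within {0..1})" if "t \<in> {0..1}" for t
      using d\<phi>[OF that] unfolding has_vector_derivative_def by (rule has_derivative_at_withinI)
    show "onorm (\<lambda>x. x *\<^sub>R V t) \<le> \<bar>h\<bar> * B" if "t \<in> {0..1}" for t
    proof (rule onorm_le)
      fix x :: real
      have "cmod (D (p + (t*h) *\<^sub>R axis i 1)) \<le> B" by (rule bnd[OF seg[OF that]])
      then have "\<bar>x\<bar> * (\<bar>h\<bar> * cmod (D (p + (t*h) *\<^sub>R axis i 1))) \<le> \<bar>x\<bar> * (\<bar>h\<bar> * B)"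
        by (intro mult_left_mono) auto
      then show "norm (x *\<^sub>R V t) \<le> \<bar>h\<bar> * B * norm x"
        by (simp add: V_def algebra_simps abs_mult)
    qed
  qed auto
  then show ?thesis by (simp add: \<phi>_def mult.commute)
qed

lemma norm_le_comp:
  fixes z y :: "real^'n::finite"
  assumes "\<And>j. \<bar>z$j\<bar> \<le> \<bar>y$j\<bar>"
  shows "norm z \<le> norm y"
  unfolding norm_vec_def by (rule L2_set_mono) (use assms in auto)

lemma path_bound:
  fixes g :: "real^'n::finite \<Rightarrow> complex" and D :: "'n \<Rightarrow> real^'n \<Rightarrow> complex"
  assumes deriv: "\<And>i \<xi>. \<xi> \<in> S \<Longrightarrow> ((\<lambda>t. g (\<xi> + t *\<^sub>R axis i 1)) has_vector_derivative D i \<xi>) (at 0)"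
    and bnd: "\<And>i \<xi>. \<xi> \<in> S \<Longrightarrow> cmod (D i \<xi>) \<le> B"
    and box: "\<And>z. (\<And>j. \<bar>z$j - x0$j\<bar> \<le> \<bar>x$j - x0$j\<bar>) \<Longrightarrow> z \<in> S"
  shows "cmod (g x - g x0) \<le> B * (\<Sum>j\<in>UNIV. \<bar>x$j - x0$j\<bar>)"
proof -
  define P where "P I = (\<chi> j. if j \<in> I then x$j else x0$j)" for I
  have "cmod (g (P I) - g x0) \<le> B * (\<Sum>j\<in>I. \<bar>x$j - x0$j\<bar>)" if "finite I" for I
    using that
  proof (induction I rule: finite_induct)
    case empty
    have "P {} = x0" by (simp add: P_def vec_eq_iff)
    then show ?case by simp
  next
    case (insert i I)
    define h where "h = x$i - x0$i"
    have Pi: "P (insert i I) = P I + h *\<^sub>R axis i 1"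
      using insert.hyps by (auto simp: P_def h_def vec_eq_iff axis_def)
    have "cmod (g (P I + h *\<^sub>R axis i 1) - g (P I)) \<le> B * \<bar>h\<bar>"
    proof (rule mvt_axis[where S=S])
      show "((\<lambda>t. g (\<xi> + t *\<^sub>R axis i 1)) has_vector_derivative D i \<xi>) (at 0)" if "\<xi> \<in> S" for \<xi>
        by (rule deriv[OF that])
      show "cmod (D i \<xi>) \<le> B" if "\<xi> \<in> S" for \<xi> by (rule bnd[OF that])
      show "P I + (t * h) *\<^sub>R axis i 1 \<in> S" if t: "t \<in> {0..1}" for t
      proof (rule box)
        fix j
        show "\<bar>(P I + (t * h) *\<^sub>R axis i 1) $ j - x0 $ j\<bar> \<le> \<bar>x $ j - x0 $ j\<bar>"
        proof (cases "j = i")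
          case True
          then have "\<bar>(P I + (t * h) *\<^sub>R axis i 1) $ j - x0 $ j\<bar> = \<bar>t\<bar> * \<bar>h\<bar>"
            using insert.hyps by (simp add: P_def axis_def abs_mult)
          also have "\<dots> \<le> 1 * \<bar>h\<bar>" using t by (intro mult_right_mono) auto
          finally show ?thesis using True by (simp add: h_def)
        next
          case False
          then show ?thesis by (simp add: P_def axis_def)
        qed
      qed
    qed
    then have "cmod (g (P (insert i I)) - g (P I)) \<le> B * \<bar>x$i - x0$i\<bar>" by (simp add: Pi h_def)
    moreover have "cmod (g (P (insert i I)) - g x0) \<le> cmod (g (P (insert i I)) - g (P I)) + cmod (g (P I) - g x0)"
      using norm_triangle_ineq[of "g (P (insert i I)) - g (P I)" "g (P I) - g x0"] by simp
    ultimately show ?case using insert by (simp add: algebra_simps)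
  qed
  moreover have "P UNIV = x" by (simp add: P_def vec_eq_iff)
  ultimately show ?thesis by (metis finite_class.finite_UNIV)
qed

lemma symbol_lip:
  fixes F :: "real^'n::{finite,linorder} \<Rightarrow> int^'n::{finite,linorder} \<Rightarrow> complex"
  assumes vs: "valued_smooth_on (-{0}) F" and x0: "x0 \<noteq> 0"
  shows "\<exists>C \<delta>. \<delta> > 0 \<and> (\<forall>x. dist x x0 < \<delta> \<longrightarrow> nr 0 (\<lambda>k. F x k - F x0 k) \<le> C * dist x x0)"
proof -
  define \<delta> where "\<delta> = norm x0 / 2"
  have \<delta>0: "\<delta> > 0" using x0 by (simp add: \<delta>_def)
  define K where "K = cball x0 \<delta>"
  have Kc: "compact K" by (simp add: K_def)
  have K0: "K \<subseteq> -{0}"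
  proof
    fix z assume "z \<in> K"
    then have "dist x0 z \<le> \<delta>" by (simp add: K_def)
    then show "z \<in> -{0}" using x0 by (auto simp: \<delta>_def dist_norm)
  qed
  define NN where "NN = 2 * CARD('n)"
  have "\<forall>i. \<exists>C. \<forall>\<xi>\<in>K. \<forall>k. om k ^ NN * cmod (pds [i] (\<lambda>\<eta>. F \<eta> k) \<xi>) \<le> C"
    using vs Kc K0 unfolding valued_smooth_on_def om_def by blast
  then obtain Cf where Cf: "\<And>i \<xi> k. \<xi> \<in> K \<Longrightarrow> om k ^ NN * cmod (pds [i] (\<lambda>\<eta>. F \<eta> k) \<xi>) \<le> Cf i"
    by metis
  define B0 where "B0 = (\<Sum>i\<in>UNIV. \<bar>Cf i\<bar>)"
  have Bi: "Cf i \<le> B0" for i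
  proof -
    have "\<bar>Cf i\<bar> \<le> B0" unfolding B0_def by (rule member_le_sum) auto
    then show ?thesis by simp
  qed
  have B00: "B0 \<ge> 0" unfolding B0_def by (rule sum_nonneg) auto
  have hap: "has_all_partials_on (-{0}) (\<lambda>\<xi>. F \<xi> k)" for k
  proof -
    have "\<forall>k. has_all_partials_on (-{0}) (\<lambda>\<xi>. F \<xi> k)"
      using vs unfolding valued_smooth_on_def by (rule conjunct1)
    then show ?thesis by (rule spec)
  qed
  have deriv: "((\<lambda>t. F (\<xi> + t *\<^sub>R axis i 1) k) has_vector_derivative pds [i] (\<lambda>\<eta>. F \<eta> k) \<xi>) (at 0)"
    if "\<xi> \<in> K" for \<xi> k i
  proof -
    have A: "\<forall>is i. \<forall>\<xi>\<in>-{0}. ((\<lambda>t. pds is (\<lambda>\<eta>. F \<eta> k) (\<xi> + t *\<^sub>R axis i 1)) has_vector_derivative pds (i # is) (\<lambda>\<eta>. F \<eta> k) \<xi>) (at 0)"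
      using hap[of k] unfolding has_all_partials_on_def .
    have "\<xi> \<in> -{0}" using K0 that by blast
    from A[rule_format, OF this, of "[]" i] show ?thesis by simp
  qed
  define S0 where "S0 = (\<Sum>\<^sub>\<infinity>k::int^'n::{finite,linorder}. 1 / om k ^ NN)"
  have pt: "cmod (F x k - F x0 k) \<le> (B0 * real CARD('n) * dist x x0) * (1 / om k ^ NN)"
    if x: "dist x x0 < \<delta>" for x k
  proof -
    have "cmod (F x k - F x0 k) \<le> (B0 / om k ^ NN) * (\<Sum>j\<in>UNIV. \<bar>x$j - x0$j\<bar>)"
    proof (rule path_bound[where S=K and D="\<lambda>i \<xi>. pds [i] (\<lambda>\<eta>. F \<eta> k) \<xi>"])
      show "((\<lambda>t. F (\<xi> + t *\<^sub>R axis i 1) k) has_vector_derivative pds [i] (\<lambda>\<eta>. F \<eta> k) \<xi>) (at 0)"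
        if "\<xi> \<in> K" for i \<xi> by (rule deriv[OF that])
      show "cmod (pds [i] (\<lambda>\<eta>. F \<eta> k) \<xi>) \<le> B0 / om k ^ NN" if "\<xi> \<in> K" for i \<xi>
      proof -
        have "om k ^ NN * cmod (pds [i] (\<lambda>\<eta>. F \<eta> k) \<xi>) \<le> B0"
          using Cf[OF that, of k i] Bi[of i] by simp
        then show ?thesis by (simp add: field_simps)
      qed
      show "z \<in> K" if "\<And>j. \<bar>z$j - x0$j\<bar> \<le> \<bar>x$j - x0$j\<bar>" for z
      proof -
        have "norm (z - x0) \<le> norm (x - x0)" by (rule norm_le_comp) (use that in simp)
        then show ?thesis using x by (simp add: K_def dist_norm norm_minus_commute)
      qed
    qed
    also have "\<dots> \<le> (B0 / om k ^ NN) * (real CARD('n) * dist x x0)"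
    proof (rule mult_left_mono)
      have "(\<Sum>j\<in>UNIV. \<bar>x$j - x0$j\<bar>) \<le> of_nat (card (UNIV::'n set)) * dist x x0"
        by (rule sum_bounded_above) (metis component_le_norm_cart dist_norm vector_minus_component)
      then show "(\<Sum>j\<in>UNIV. \<bar>x$j - x0$j\<bar>) \<le> real CARD('n) * dist x x0" by simp
    qed (use B00 in simp)
    finally show ?thesis by (simp add: field_simps)
  qed
  have Ss: "(\<lambda>k::int^'n::{finite,linorder}. 1 / om k ^ NN) summable_on UNIV"
    unfolding NN_def by (rule om_inv_summable)
  show ?thesis
  proof (intro exI conjI allI impI)
    show "\<delta> > 0" by (rule \<delta>0)
    fix x assume x: "dist x x0 < \<delta>"
    have rs: "(\<lambda>k::int^'n::{finite,linorder}. (B0 * real CARD('n) * dist x x0) * (1 / om k ^ NN)) summable_on UNIV"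
      by (rule summable_on_cmult_right[OF Ss])
    have ls: "(\<lambda>k. om k ^ 0 * cmod (F x k - F x0 k)) summable_on UNIV"
      by (rule summable_on_comparison_test[OF rs]) (use pt[OF x] in auto)
    have "nr 0 (\<lambda>k. F x k - F x0 k) \<le> (\<Sum>\<^sub>\<infinity>k::int^'n::{finite,linorder}. (B0 * real CARD('n) * dist x x0) * (1 / om k ^ NN))"
      unfolding nr_def by (rule infsum_mono[OF ls rs]) (use pt[OF x] in auto)
    also have "\<dots> = (B0 * real CARD('n) * dist x x0) * S0"
      unfolding S0_def by (rule infsum_cmult_right')
    also have "\<dots> = (B0 * real CARD('n) * S0) * dist x x0" by simp
    finally show "nr 0 (\<lambda>k. F x k - F x0 k) \<le> (B0 * real CARD('n) * S0) * dist x x0" .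
  qed
qed

lemma compact_inv_bound:
  fixes K :: "'a::metric_space set" and G :: "'a \<Rightarrow> int^'n::{finite,linorder} \<Rightarrow> complex"
  assumes Kc: "compact K"
    and sG: "\<And>p. p \<in> K \<Longrightarrow> sm (G p)"
    and inv: "\<And>p. p \<in> K \<Longrightarrow> \<exists>c. ip \<theta> (G p) c"
    and cont: "\<And>p e. p \<in> K \<Longrightarrow> e > 0 \<Longrightarrow> \<exists>\<delta>>0. \<forall>q\<in>K. dist q p < \<delta> \<longrightarrow> nr 0 (\<lambda>k. G q k - G p k) < e"
  shows "\<exists>M. \<forall>p\<in>K. \<exists>c. ip \<theta> (G p) c \<and> nr 0 c \<le> M"
proof -
  obtain cf where cf: "\<And>p. p \<in> K \<Longrightarrow> ip \<theta> (G p) (cf p)" using inv by metis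
  define Mf where "Mf p = nr 0 (cf p)" for p
  have Mf0: "Mf p \<ge> 0" for p by (simp add: Mf_def nr_nonneg)
  have "\<exists>\<delta>>0. \<forall>q\<in>K. dist q p < \<delta> \<longrightarrow> nr 0 (\<lambda>k. G q k - G p k) < 1 / (2 * (Mf p + 1))" if "p \<in> K" for p
    by (rule cont[OF that]) (use Mf0[of p] in simp)
  then obtain df where df: "\<And>p. p \<in> K \<Longrightarrow> df p > 0"
    and dfc: "\<And>p q. p \<in> K \<Longrightarrow> q \<in> K \<Longrightarrow> dist q p < df p \<Longrightarrow> nr 0 (\<lambda>k. G q k - G p k) < 1 / (2 * (Mf p + 1))"
    by metis
  have local: "\<exists>c. ip \<theta> (G q) c \<and> nr 0 c \<le> 2 * Mf p"
    if p: "p \<in> K" and q: "q \<in> K" and d: "dist q p < df p" for p q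
  proof -
    define b where "b k = G q k - G p k" for k
    have sb: "sm b" unfolding b_def[abs_def] by (rule sm_diff[OF sG[OF q] sG[OF p]])
    have nb: "nr 0 b < 1 / (2 * (Mf p + 1))" unfolding b_def[abs_def] by (rule dfc[OF p q d])
    have "nr 0 b * nr 0 (cf p) \<le> 1/2"
    proof -
      have "nr 0 b * Mf p \<le> (1 / (2 * (Mf p + 1))) * Mf p"
        using nb Mf0[of p] by (intro mult_right_mono) auto
      also have "\<dots> \<le> 1/2" using Mf0[of p] by (simp add: field_simps)
      finally show ?thesis by (simp add: Mf_def)
    qed
    from perturb[OF cf[OF p] sb this] obtain c' where
      "ip \<theta> (\<lambda>k. G p k + b k) c'" "nr 0 c' \<le> 2 * nr 0 (cf p)" by blast
    moreover have "(\<lambda>k. G p k + b k) = G q" by (simp add: b_def)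
    ultimately show ?thesis by (auto simp: Mf_def)
  qed
  have cover: "K \<subseteq> (\<Union>p\<in>K. ball p (df p))"
    using df by (auto simp: dist_commute intro!: bexI)
  have "\<exists>C'. C' \<subseteq> K \<and> finite C' \<and> K \<subseteq> (\<Union>p\<in>C'. ball p (df p))"
    by (rule compactE_image[OF Kc _ cover]) auto
  then obtain C' where C': "C' \<subseteq> K" "finite C'" "K \<subseteq> (\<Union>p\<in>C'. ball p (df p))"
    by blast
  define M where "M = (\<Sum>p\<in>C'. 2 * Mf p)"
  show ?thesis
  proof (rule exI[of _ M], intro ballI)
    fix q assume q: "q \<in> K"
    then obtain p where p: "p \<in> C'" and qp: "q \<in> ball p (df p)" using C'(3) by blast
    have pK: "p \<in> K" using p C'(1) by blast
    obtain c where c: "ip \<theta> (G q) c" "nr 0 c \<le> 2 * Mf p"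
      using local[OF pK q] qp by (auto simp: dist_commute)
    have "2 * Mf p \<le> M" unfolding M_def
      by (rule member_le_sum[OF p]) (use Mf0 C'(2) in auto)
    with c show "\<exists>c. ip \<theta> (G q) c \<and> nr 0 c \<le> M" by auto
  qed
qed

lemma ip_one: "ip \<theta> nct_one nct_one"
  unfolding ip_def by (simp add: sm_one mult_one_left)

lemma sm_of_invertible: "nct_invertible \<theta> a \<Longrightarrow> sm a"
  unfolding nct_invertible_def smooth_iff by blast

lemma cone_step:
  fixes R :: "real^'n::{finite,linorder} \<Rightarrow> int^'n::{finite,linorder} \<Rightarrow> complex"
  assumes hom: "\<And>t \<xi>. t > 0 \<Longrightarrow> \<xi> \<noteq> 0 \<Longrightarrow> R (t *\<^sub>R \<xi>) = (\<lambda>k. complex_of_real (t powr w) * R \<xi> k)"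
    and w: "w > 0" and z: "z \<in> Theta \<theta> R" and \<tau>: "\<tau> > 0" and \<xi>: "\<xi> \<noteq> 0"
  shows "\<exists>c. ip \<theta> (\<lambda>k. R \<xi> k - complex_of_real \<tau> * z * nct_one k) c"
proof -
  define s where "s = \<tau> powr (-1/w)"
  have s0: "s > 0" using \<tau> by (simp add: s_def)
  have sw: "s powr w = 1 / \<tau>"
  proof -
    have "s powr w = \<tau> powr (-1/w * w)" unfolding s_def by (rule powr_powr)
    also have "-1/w * w = - 1" using w by simp
    also have "\<tau> powr (- 1) = inverse (\<tau> powr 1)" by (rule powr_minus)
    also have "\<tau> powr 1 = \<tau>" using \<tau> by simp
    finally show ?thesis by (simp add: divide_inverse)
  qed
  have "s *\<^sub>R \<xi> \<noteq> 0" using s0 \<xi> by simp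
  then have "nct_invertible \<theta> (\<lambda>k. R (s *\<^sub>R \<xi>) k - z * nct_one k)"
    using z unfolding Theta_def by blast
  then obtain c where c: "ip \<theta> (\<lambda>k. R (s *\<^sub>R \<xi>) k - z * nct_one k) c"
    unfolding invertible_ip by blast
  have "ip \<theta> (\<lambda>k. complex_of_real \<tau> * (R (s *\<^sub>R \<xi>) k - z * nct_one k)) (\<lambda>k. inverse (complex_of_real \<tau>) * c k)"
    by (rule ip_scal[OF c]) (use \<tau> in simp)
  moreover have "(\<lambda>k. complex_of_real \<tau> * (R (s *\<^sub>R \<xi>) k - z * nct_one k)) = (\<lambda>k. R \<xi> k - complex_of_real \<tau> * z * nct_one k)"
  proof
    fix k
    have "R (s *\<^sub>R \<xi>) k = complex_of_real (1 / \<tau>) * R \<xi> k" using hom[OF s0 \<xi>] sw by simp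
    then show "complex_of_real \<tau> * (R (s *\<^sub>R \<xi>) k - z * nct_one k) = R \<xi> k - complex_of_real \<tau> * z * nct_one k"
      using \<tau> by (simp add: algebra_simps of_real_divide)
  qed
  ultimately show ?thesis by auto
qed

lemma theta_cone:
  fixes R :: "real^'n::{finite,linorder} \<Rightarrow> int^'n::{finite,linorder} \<Rightarrow> complex"
  assumes hom: "\<And>t \<xi>. t > 0 \<Longrightarrow> \<xi> \<noteq> 0 \<Longrightarrow> R (t *\<^sub>R \<xi>) = (\<lambda>k. complex_of_real (t powr w) * R \<xi> k)"
    and w: "w > 0"
  shows "is_cone (Theta \<theta> R)"
  unfolding is_cone_def
proof (intro allI ballI impI)
  fix t :: real and z assume z: "z \<in> Theta \<theta> R" and t: "t > 0"
  have "z \<noteq> 0" using z by (simp add: Theta_def)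
  then have "complex_of_real t * z \<noteq> 0" using t by simp
  moreover have "nct_invertible \<theta> (\<lambda>k. R \<xi> k - complex_of_real t * z * nct_one k)" if "\<xi> \<noteq> 0" for \<xi>
    using cone_step[OF hom w z t that] unfolding invertible_ip by blast
  ultimately show "complex_of_real t * z \<in> Theta \<theta> R" unfolding Theta_def by blast
qed

lemma theta_open:
  fixes R :: "real^'n::{finite,linorder} \<Rightarrow> int^'n::{finite,linorder} \<Rightarrow> complex"
  assumes hom: "\<And>t \<xi>. t > 0 \<Longrightarrow> \<xi> \<noteq> 0 \<Longrightarrow> R (t *\<^sub>R \<xi>) = (\<lambda>k. complex_of_real (t powr w) * R \<xi> k)"
    and w: "w > 0" and vs: "valued_smooth_on (-{0}) R" and ell: "nct_elliptic \<theta> R"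
  shows "open (Theta \<theta> R)"
  unfolding open_contains_ball
proof
  fix z0 assume z0: "z0 \<in> Theta \<theta> R"
  have z0ne: "z0 \<noteq> 0" using z0 by (simp add: Theta_def)
  have smR: "sm (R \<eta>)" if "\<eta> \<noteq> 0" for \<eta>
    using ell that unfolding nct_elliptic_def by (blast intro: sm_of_invertible)
  have ipR: "\<exists>c. ip \<theta> (R \<eta>) c" if "\<eta> \<noteq> 0" for \<eta>
    using ell that unfolding nct_elliptic_def invertible_ip by blast
  define K where "K = sphere (0::real^'n::{finite,linorder}) 1 \<times> {0..1::real}"
  define G where "G p = (\<lambda>k. complex_of_real (1 - snd p) * R (fst p) k - complex_of_real (snd p) * z0 * nct_one k)" for p
  have Kc: "compact K" unfolding K_def by (intro compact_Times compact_sphere compact_Icc)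
  have Kfst: "fst p \<noteq> 0" "norm (fst p) = 1" and Ksnd: "0 \<le> snd p" "snd p \<le> 1" if "p \<in> K" for p
    using that by (auto simp: K_def)
  have sG: "sm (G p)" if "p \<in> K" for p
    unfolding G_def by (intro sm_diff sm_scal smR[OF Kfst(1)[OF that]] sm_one)
  have inv: "\<exists>c. ip \<theta> (G p) c" if p: "p \<in> K" for p
  proof -
    define \<eta> where "\<eta> = fst p"
    define t where "t = snd p"
    have \<eta>0: "\<eta> \<noteq> 0" using Kfst[OF p] by (simp add: \<eta>_def)
    have t01: "0 \<le> t" "t \<le> 1" using Ksnd[OF p] by (auto simp: t_def)
    consider "t = 0" | "t = 1" | "0 < t \<and> t < 1" using t01 by linarith
    then show ?thesis
    proof cases
      case 1
      have "G p = R \<eta>" using 1 by (simp add: G_def \<eta>_def t_def)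
      then show ?thesis using ipR[OF \<eta>0] by simp
    next
      case 2
      have "G p = (\<lambda>k::int^'n::{finite,linorder}. (- z0) * nct_one k)" using 2 by (simp add: G_def t_def)
      moreover have "ip \<theta> (\<lambda>k::int^'n::{finite,linorder}. (- z0) * nct_one k) (\<lambda>k. inverse (- z0) * nct_one k)"
        by (rule ip_scal[OF ip_one]) (use z0ne in simp)
      ultimately show ?thesis by auto
    next
      case 3
      define \<tau> where "\<tau> = t / (1 - t)"
      have \<tau>0: "\<tau> > 0" using 3 by (simp add: \<tau>_def)
      obtain c where c: "ip \<theta> (\<lambda>k. R \<eta> k - complex_of_real \<tau> * z0 * nct_one k) c"
        using cone_step[OF hom w z0 \<tau>0 \<eta>0] by blast
      have "ip \<theta> (\<lambda>k. complex_of_real (1 - t) * (R \<eta> k - complex_of_real \<tau> * z0 * nct_one k)) (\<lambda>k. inverse (complex_of_real (1 - t)) * c k)"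
        by (rule ip_scal[OF c]) (use 3 in simp)
      moreover have "(\<lambda>k. complex_of_real (1 - t) * (R \<eta> k - complex_of_real \<tau> * z0 * nct_one k)) = G p"
      proof
        fix k
        have e: "complex_of_real (1 - t) * complex_of_real \<tau> = complex_of_real t"
          using 3 by (simp add: \<tau>_def flip: of_real_mult)
        have "complex_of_real (1 - t) * (R \<eta> k - complex_of_real \<tau> * z0 * nct_one k)
            = complex_of_real (1 - t) * R \<eta> k - (complex_of_real (1 - t) * complex_of_real \<tau>) * z0 * nct_one k"
          by (simp add: algebra_simps)
        then show "complex_of_real (1 - t) * (R \<eta> k - complex_of_real \<tau> * z0 * nct_one k) = G p k"
          unfolding e by (simp add: G_def \<eta>_def t_def)
      qed
      ultimately show ?thesis by auto
    qed
  qed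
  have cont: "\<exists>\<delta>>0. \<forall>q\<in>K. dist q p < \<delta> \<longrightarrow> nr 0 (\<lambda>k. G q k - G p k) < e"
    if p: "p \<in> K" and e: "e > 0" for p e
  proof -
    define \<eta> where "\<eta> = fst p"
    define t where "t = snd p"
    have \<eta>0: "\<eta> \<noteq> 0" using Kfst[OF p] by (simp add: \<eta>_def)
    obtain C \<delta>1 where \<delta>1: "\<delta>1 > 0" and lip: "\<And>x. dist x \<eta> < \<delta>1 \<Longrightarrow> nr 0 (\<lambda>k. R x k - R \<eta> k) \<le> C * dist x \<eta>"
      using symbol_lip[OF vs \<eta>0] by blast
    define A where "A = \<bar>C\<bar> + nr 0 (R \<eta>) + cmod z0 + 1"
    have A0: "A > 0" using nr_nonneg[of 0 "R \<eta>"] by (simp add: A_def add_nonneg_pos)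
    define \<delta> where "\<delta> = min \<delta>1 (e / A)"
    have \<delta>0: "\<delta> > 0" using \<delta>1 e A0 by (simp add: \<delta>_def)
    show ?thesis
    proof (intro exI conjI ballI impI)
      show "\<delta> > 0" by (rule \<delta>0)
      fix q assume q: "q \<in> K" and dq: "dist q p < \<delta>"
      define \<eta>' where "\<eta>' = fst q"
      define t' where "t' = snd q"
      have \<eta>'0: "\<eta>' \<noteq> 0" using Kfst[OF q] by (simp add: \<eta>'_def)
      have t'01: "0 \<le> t'" "t' \<le> 1" using Ksnd[OF q] by (auto simp: t'_def)
      have d1: "dist \<eta>' \<eta> \<le> dist q p" unfolding \<eta>'_def \<eta>_def by (rule dist_fst_le)
      have d2: "\<bar>t' - t\<bar> \<le> dist q p"
        using dist_snd_le[of q p] by (simp add: t'_def t_def dist_real_def)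
      have sR: "sm (R \<eta>)" "sm (R \<eta>')" using smR \<eta>0 \<eta>'0 by auto
      have sD: "sm (\<lambda>k. R \<eta>' k - R \<eta> k)" by (rule sm_diff[OF sR(2) sR(1)])
      have eq: "(\<lambda>k. G q k - G p k) = (\<lambda>k. complex_of_real (1 - t') * (R \<eta>' k - R \<eta> k) +
                  (complex_of_real (t - t') * R \<eta> k - (complex_of_real (t' - t) * z0) * nct_one k))"
        by (auto simp: fun_eq_iff G_def \<eta>'_def \<eta>_def t'_def t_def algebra_simps)
      have "nr 0 (\<lambda>k. G q k - G p k) \<le> nr 0 (\<lambda>k. complex_of_real (1 - t') * (R \<eta>' k - R \<eta> k)) +
              nr 0 (\<lambda>k. complex_of_real (t - t') * R \<eta> k - (complex_of_real (t' - t) * z0) * nct_one k)"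
        unfolding eq by (intro nr_add sm_scal sm_diff sD sR sm_one)
      also have "\<dots> \<le> nr 0 (\<lambda>k. complex_of_real (1 - t') * (R \<eta>' k - R \<eta> k)) +
              (nr 0 (\<lambda>k. complex_of_real (t - t') * R \<eta> k) + nr 0 (\<lambda>k::int^'n::{finite,linorder}. (complex_of_real (t' - t) * z0) * nct_one k))"
      proof (rule add_left_mono)
        have s1: "sm (\<lambda>k. complex_of_real (t - t') * R \<eta> k)" by (rule sm_scal[OF sR(1)])
        have s2: "sm (\<lambda>k::int^'n::{finite,linorder}. (complex_of_real (t' - t) * z0) * nct_one k)" by (rule sm_scal[OF sm_one])
        show "nr 0 (\<lambda>k. complex_of_real (t - t') * R \<eta> k - (complex_of_real (t' - t) * z0) * nct_one k)
          \<le> nr 0 (\<lambda>k. complex_of_real (t - t') * R \<eta> k) + nr 0 (\<lambda>k::int^'n::{finite,linorder}. (complex_of_real (t' - t) * z0) * nct_one k)"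
          by (rule nr_diff[OF s1 s2])
      qed
      also have "\<dots> = \<bar>1 - t'\<bar> * nr 0 (\<lambda>k. R \<eta>' k - R \<eta> k) + (\<bar>t - t'\<bar> * nr 0 (R \<eta>) + \<bar>t' - t\<bar> * cmod z0)"
        by (simp only: nr_scal nr_one norm_mult norm_of_real mult_1_right)
      also have "\<dots> \<le> 1 * (\<bar>C\<bar> * dist q p) + (dist q p * nr 0 (R \<eta>) + dist q p * cmod z0)"
      proof (intro add_mono mult_mono)
        show "\<bar>1 - t'\<bar> \<le> 1" using t'01 by simp
        have "dist \<eta>' \<eta> < \<delta>1" using d1 dq by (simp add: \<delta>_def)
        then have "nr 0 (\<lambda>k. R \<eta>' k - R \<eta> k) \<le> C * dist \<eta>' \<eta>" by (rule lip)
        also have "\<dots> \<le> \<bar>C\<bar> * dist q p" using d1 by (intro mult_mono) auto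
        finally show "nr 0 (\<lambda>k. R \<eta>' k - R \<eta> k) \<le> \<bar>C\<bar> * dist q p" .
        show "\<bar>t - t'\<bar> \<le> dist q p" using d2 by (simp add: abs_minus_commute)
        show "\<bar>t' - t\<bar> \<le> dist q p" by (rule d2)
      qed (auto simp: nr_nonneg)
      also have "\<dots> = (A - 1) * dist q p" by (simp add: A_def algebra_simps)
      also have "\<dots> < A * (e / A)"
      proof -
        have "(A - 1) * dist q p \<le> A * dist q p" by (simp add: algebra_simps)
        also have "\<dots> < A * (e / A)"
        proof (rule mult_strict_left_mono)
          show "dist q p < e / A" using dq by (simp add: \<delta>_def)
        qed (rule A0)
        finally show ?thesis .
      qed
      also have "\<dots> = e" using A0 by simp
      finally show "nr 0 (\<lambda>k. G q k - G p k) < e" .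
    qed
  qed
  obtain M where M: "\<And>p. p \<in> K \<Longrightarrow> \<exists>c. ip \<theta> (G p) c \<and> nr 0 c \<le> M"
    using compact_inv_bound[OF Kc sG inv cont] by blast
  define M' where "M' = \<bar>M\<bar> + 1"
  have M'0: "M' > 0" by (simp add: M'_def add_nonneg_pos)
  define \<epsilon> where "\<epsilon> = min (cmod z0) (1 / (2 * M'))"
  have \<epsilon>0: "\<epsilon> > 0" using z0ne M'0 by (simp add: \<epsilon>_def)
  show "\<exists>e>0. ball z0 e \<subseteq> Theta \<theta> R"
  proof (intro exI conjI subsetI)
    show "\<epsilon> > 0" by (rule \<epsilon>0)
    fix z assume "z \<in> ball z0 \<epsilon>"
    then have dz: "cmod (z - z0) < \<epsilon>" by (simp add: dist_norm norm_minus_commute)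
    have zne: "z \<noteq> 0"
    proof
      assume "z = 0" then show False using dz by (simp add: \<epsilon>_def)
    qed
    have "nct_invertible \<theta> (\<lambda>k. R \<xi> k - z * nct_one k)" if \<xi>: "\<xi> \<noteq> 0" for \<xi>
    proof -
      define r where "r = norm \<xi>"
      have r0: "r > 0" using \<xi> by (simp add: r_def)
      define \<eta> where "\<eta> = (1/r) *\<^sub>R \<xi>"
      have n\<eta>: "norm \<eta> = 1" using r0 by (simp add: \<eta>_def r_def)
      have \<eta>0: "\<eta> \<noteq> 0" using n\<eta> by auto
      have \<xi>\<eta>: "\<xi> = r *\<^sub>R \<eta>" using r0 by (simp add: \<eta>_def)
      define Rw where "Rw = r powr w"
      have Rw0: "Rw > 0" using r0 by (simp add: Rw_def)
      define t where "t = 1 / (Rw + 1)"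
      have t01: "0 \<le> t" "t \<le> 1" using Rw0 by (auto simp: t_def)
      define p where "p = (\<eta>, t)"
      have pK: "p \<in> K" using n\<eta> t01 by (simp add: p_def K_def)
      obtain c where c: "ip \<theta> (G p) c" "nr 0 c \<le> M" using M[OF pK] by blast
      define b where "b (k::int^'n::{finite,linorder}) = (- (complex_of_real t * (z - z0))) * nct_one k" for k
      have sb: "sm b" unfolding b_def[abs_def] by (intro sm_scal sm_one)
      have nb: "nr 0 b \<le> 1 / (2 * M')"
      proof -
        have "nr 0 b = t * cmod (z - z0)"
          unfolding b_def[abs_def] nr_scal nr_one using t01 by (simp add: norm_mult)
        also have "\<dots> \<le> 1 * cmod (z - z0)" using t01 by (intro mult_right_mono) auto
        also have "\<dots> \<le> 1 / (2 * M')" using dz by (simp add: \<epsilon>_def)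
        finally show ?thesis .
      qed
      have "nr 0 b * nr 0 c \<le> (1 / (2 * M')) * M'"
      proof (rule mult_mono)
        show "nr 0 c \<le> M'" using c(2) by (simp add: M'_def)
      qed (use nb M'0 in \<open>auto simp: nr_nonneg\<close>)
      also have "\<dots> = 1/2" using M'0 by simp
      finally have small: "nr 0 b * nr 0 c \<le> 1/2" .
      obtain c' where c': "ip \<theta> (\<lambda>k. G p k + b k) c'"
        using perturb[OF c(1) sb small] by blast
      have "ip \<theta> (\<lambda>k. complex_of_real (Rw + 1) * (G p k + b k)) (\<lambda>k. inverse (complex_of_real (Rw + 1)) * c' k)"
        by (rule ip_scal[OF c']) (use Rw0 in \<open>simp del: of_real_add\<close>)
      moreover have "(\<lambda>k. complex_of_real (Rw + 1) * (G p k + b k)) = (\<lambda>k. R \<xi> k - z * nct_one k)"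
      proof
        fix k
        have r1: "(Rw + 1) * (1 - t) = Rw" using Rw0 by (simp add: t_def field_simps)
        have r2: "(Rw + 1) * t = 1" using Rw0 by (simp add: t_def)
        have a1: "complex_of_real (Rw + 1) * complex_of_real (1 - t) = complex_of_real Rw"
          unfolding of_real_mult[symmetric] r1 ..
        have a2: "complex_of_real (Rw + 1) * complex_of_real t = 1"
          unfolding of_real_mult[symmetric] r2 by simp
        have R\<xi>: "R \<xi> k = complex_of_real Rw * R \<eta> k"
          using hom[OF r0 \<eta>0] by (simp add: \<xi>\<eta> Rw_def)
        have "complex_of_real (Rw + 1) * (G p k + b k)
            = (complex_of_real (Rw + 1) * complex_of_real (1 - t)) * R \<eta> k
              - (complex_of_real (Rw + 1) * complex_of_real t) * (z0 * nct_one k + (z - z0) * nct_one k)"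
          by (simp add: G_def b_def p_def algebra_simps)
        also have "\<dots> = R \<xi> k - z * nct_one k"
          unfolding a1 a2 R\<xi> by (simp add: algebra_simps)
        finally show "complex_of_real (Rw + 1) * (G p k + b k) = R \<xi> k - z * nct_one k" .
      qed
      ultimately show ?thesis unfolding invertible_ip by auto
    qed
    then show "z \<in> Theta \<theta> R" using zne by (simp add: Theta_def)
  qed
qed

theorem lemma6p6:
  fixes \<theta> :: "real^'n::{finite,linorder}^'n::{finite,linorder}"
    and w :: real
    and \<rho> :: "real^'n::{finite,linorder} \<Rightarrow> int^'n::{finite,linorder} \<Rightarrow> complex"
    and \<rho>s :: "nat \<Rightarrow> real^'n::{finite,linorder} \<Rightarrow> int^'n::{finite,linorder} \<Rightarrow> complex"
  assumes "CARD('n) \<ge> 2"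
    and "\<forall>i j. \<theta>$i$j = - \<theta>$j$i"
    and "w > 0"
    and "classical_symbol w \<rho> \<rho>s"
    and "nct_elliptic \<theta> (\<rho>s 0)"
    and "Theta \<theta> (\<rho>s 0) \<noteq> {}"
  shows "open (Theta \<theta> (\<rho>s 0)) \<and> is_cone (Theta \<theta> (\<rho>s 0))"
proof -
  have C3: "\<forall>j. valued_smooth_on (-{0}) (\<rho>s j) \<and>
        (\<forall>t::real. \<forall>\<xi>. t > 0 \<and> \<xi> \<noteq> 0 \<longrightarrow>
           \<rho>s j (t *\<^sub>R \<xi>) = (\<lambda>k. complex_of_real (t powr (w - real j)) * \<rho>s j \<xi> k))"
    using assms(4) unfolding classical_symbol_def by (elim conjE)
  have vs: "valued_smooth_on (-{0}) (\<rho>s 0)" using spec[OF C3, of 0] by (rule conjunct1)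
  have hom0: "\<forall>t::real. \<forall>\<xi>. t > 0 \<and> \<xi> \<noteq> 0 \<longrightarrow>
           \<rho>s 0 (t *\<^sub>R \<xi>) = (\<lambda>k. complex_of_real (t powr (w - real 0)) * \<rho>s 0 \<xi> k)"
    using spec[OF C3, of 0] by (rule conjunct2)
  have hom: "\<rho>s 0 (t *\<^sub>R \<xi>) = (\<lambda>k. complex_of_real (t powr w) * \<rho>s 0 \<xi> k)"
    if "t > 0" "\<xi> \<noteq> 0" for t \<xi>
    using hom0 that by simp
  show ?thesis using theta_open[OF hom assms(3) vs assms(5)] theta_cone[OF hom assms(3)] by simp
qed

end
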